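(* Let $k\ge 1$ and let $T,\widetilde{T}$ be binary phylogenetic $X$-trees with $|X|=2k$ and $A_k(T)=A_k(\widetilde{T})$. Let $[x,y]$ be a cherry of $T$, and let $P=x,\beta_1,\ldots,\beta_m,y$ be the unique $x$-$y$ path in $\widetilde{T}$. Deleting all vertices of $P$ (and their incident edges) from $\widetilde{T}$ yields trees $T_{A_1},\ldots,T_{A_m}$ (where $T_{A_i}$ was attached to $\beta_i$) with leaf sets $A_1,\ldots,A_m$. Then $|A_i|$ is even for every $i\in\{1,\dots,m\}$.
   Context: A phylogenetic $X$-tree is a tree with no vertices of degree 2 whose leaves are bijectively labelled by (and identified with) $X$; binary means maximum degree 3. A cherry $[x,y]$ is a pair of leaves adjacent to the same vertex. For a binary character $f: X\to\{a,b\}$, $l(f,T)$ is the minimum, over all maps $g:V(T)\to\{a,b\}$ with $g|_X=f$, of the number of edges $\{u,v\}$ with $g(u)\ne g(v)$; $A_k(T)$ is the set of all binary characters $f$ on $X$ with $l(f,T)=k$. *)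

theory Defs
  imports Main "HOL-Library.FuncSet"
begin

text \<open>Graphs: a finite vertex set V and a set E of undirected edges, each a 2-element subset of V.\<close>

definition adj_in :: "'v set set \<Rightarrow> 'v set \<Rightarrow> ('v \<times> 'v) set" where
  "adj_in E W = {(a, b). {a, b} \<in> E \<and> a \<in> W \<and> b \<in> W}"

definition connected_graph :: "'v set \<Rightarrow> 'v set set \<Rightarrow> bool" where
  "connected_graph V E \<longleftrightarrow> (\<forall>u\<in>V. \<forall>v\<in>V. (u, v) \<in> (adj_in E V)\<^sup>*)"

definition is_tree :: "'v set \<Rightarrow> 'v set set \<Rightarrow> bool" where
  "is_tree V E \<longleftrightarrow> finite V \<and> V \<noteq> {} \<and>
     (\<forall>e\<in>E. e \<subseteq> V \<and> card e = 2) \<and> connected_graph V E \<and> card E + 1 = card V"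

definition degree :: "'v set set \<Rightarrow> 'v \<Rightarrow> nat" where
  "degree E v = card {e \<in> E. v \<in> e}"

definition binary_phylo_tree :: "'v set \<Rightarrow> 'v set \<Rightarrow> 'v set set \<Rightarrow> bool" where
  "binary_phylo_tree X V E \<longleftrightarrow> is_tree V E \<and> X \<subseteq> V \<and>
     X = {v \<in> V. degree E v = 1} \<and>
     (\<forall>v\<in>V. degree E v \<noteq> 2 \<and> degree E v \<le> 3)"

definition changes :: "'v set set \<Rightarrow> ('v \<Rightarrow> bool) \<Rightarrow> nat" where
  "changes E g = card {e \<in> E. \<exists>u v. e = {u, v} \<and> g u \<noteq> g v}"

text \<open>Parsimony score l(f,T) of a binary character f (states a,b encoded as bool).\<close>
definition parsimony :: "'v set \<Rightarrow> 'v set set \<Rightarrow> ('v \<Rightarrow> bool) \<Rightarrow> nat" where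
  "parsimony X E f = Min {changes E g | g. \<forall>x\<in>X. g x = f x}"

definition A_set :: "nat \<Rightarrow> 'v set \<Rightarrow> 'v set set \<Rightarrow> ('v \<Rightarrow> bool) set" where
  "A_set k X E = {f \<in> extensional X. parsimony X E f = k}"

definition is_cherry :: "'v set \<Rightarrow> 'v set \<Rightarrow> 'v set set \<Rightarrow> 'v \<Rightarrow> 'v \<Rightarrow> bool" where
  "is_cherry X V E x y \<longleftrightarrow> x \<in> X \<and> y \<in> X \<and> x \<noteq> y \<and>
     (\<exists>w\<in>V. {x, w} \<in> E \<and> {y, w} \<in> E)"

definition is_path :: "'v set set \<Rightarrow> 'v list \<Rightarrow> bool" where
  "is_path E ps \<longleftrightarrow> ps \<noteq> [] \<and> distinct ps \<and>
     (\<forall>i. Suc i < length ps \<longrightarrow> {ps ! i, ps ! Suc i} \<in> E)"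

text \<open>Leaf set of the part of the tree hanging off path vertex b after deleting the
  path vertices: the leaves reachable from b without using any other path vertex.\<close>
definition attached_leaves ::
  "'v set \<Rightarrow> 'v set \<Rightarrow> 'v set set \<Rightarrow> 'v set \<Rightarrow> 'v \<Rightarrow> 'v set" where
  "attached_leaves X V E P b =
     {z \<in> X. z \<notin> P \<and> (b, z) \<in> (adj_in E ((V - P) \<union> {b}))\<^sup>*}"

end

theory Submission
  imports Defs
begin


lemma adj_in_sym: "(a,b) \<in> adj_in E W \<Longrightarrow> (b,a) \<in> adj_in E W"
  by (auto simp: adj_in_def insert_commute)

lemma adj_in_mono: "A \<subseteq> B \<Longrightarrow> adj_in E A \<subseteq> adj_in E B"
  by (auto simp: adj_in_def)

lemma adj_in_conv: "(adj_in E W)\<inverse> = adj_in E W"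
  using adj_in_sym by auto

lemma rt_sym: "(a,b) \<in> (adj_in E W)\<^sup>* \<Longrightarrow> (b,a) \<in> (adj_in E W)\<^sup>*"
  by (metis adj_in_conv converse_iff rtrancl_converse)

lemma rt_mono: "A \<subseteq> B \<Longrightarrow> (a,b) \<in> (adj_in E A)\<^sup>* \<Longrightarrow> (a,b) \<in> (adj_in E B)\<^sup>*"
  using rtrancl_mono[OF adj_in_mono] by blast

lemma reach_in: "(a,b) \<in> (adj_in E A)\<^sup>* \<Longrightarrow> b = a \<or> b \<in> A"
  by (induct rule: rtrancl_induct) (auto simp: adj_in_def)

lemma reach_closure: "(a,b) \<in> (adj_in E A)\<^sup>* \<Longrightarrow> (a,b) \<in> (adj_in E {v. (a,v) \<in> (adj_in E A)\<^sup>*})\<^sup>*"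
proof (induct rule: rtrancl_induct)
  case base then show ?case by simp
next
  case (step c b)
  have "(a,b) \<in> (adj_in E A)\<^sup>*" using step(1,2) by (meson rtrancl.rtrancl_into_rtrancl)
  then have "(c,b) \<in> adj_in E {v. (a,v) \<in> (adj_in E A)\<^sup>*}"
    using step(1,2) by (auto simp: adj_in_def)
  then show ?case using step(3) by (meson rtrancl.rtrancl_into_rtrancl)
qed

lemma avoid: "B \<subseteq> V \<Longrightarrow> z \<notin> B \<Longrightarrow> z \<in> e \<Longrightarrow> adj_in E B \<subseteq> adj_in (E - {e}) V"
  by (auto simp: adj_in_def)

lemma last_exit:
  assumes "(a,v) \<in> (adj_in E (B \<union> {a}))\<^sup>*" "v \<noteq> a" "a \<notin> B"
  shows "\<exists>w. (a,w) \<in> adj_in E (B \<union> {a}) \<and> w \<in> B \<and> (w,v) \<in> (adj_in E B)\<^sup>*"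
  using assms(1,2)
proof (induct rule: rtrancl_induct)
  case base then show ?case by simp
next
  case (step c v)
  show ?case
  proof (cases "c = a")
    case True
    then show ?thesis using step by (auto simp: adj_in_def)
  next
    case False
    then obtain w where w: "(a,w) \<in> adj_in E (B \<union> {a})" "w \<in> B" "(w,c) \<in> (adj_in E B)\<^sup>*"
      using step by blast
    have "(c,v) \<in> adj_in E B" using step(2) False step(4) by (auto simp: adj_in_def)
    then show ?thesis using w by (meson rtrancl.rtrancl_into_rtrancl)
  qed
qed

definition dist :: "('v \<times> 'v) set \<Rightarrow> 'v \<Rightarrow> 'v \<Rightarrow> nat" where
  "dist R r v = (LEAST n. (v,r) \<in> R ^^ n)"

lemma dist_ex: "(v,r) \<in> R\<^sup>* \<Longrightarrow> (v,r) \<in> R ^^ (dist R r v)"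
  unfolding dist_def by (metis LeastI_ex rtrancl_power)

lemma dist_le: "(v,r) \<in> R ^^ n \<Longrightarrow> dist R r v \<le> n"
  unfolding dist_def by (rule Least_le)

lemma dist_0: "(v,r) \<in> R\<^sup>* \<Longrightarrow> dist R r v = 0 \<Longrightarrow> v = r"
  using dist_ex by fastforce

lemma dist_step:
  assumes "(v,r) \<in> R\<^sup>*" "dist R r v > 0"
  shows "\<exists>u. (v,u) \<in> R \<and> (u,r) \<in> R\<^sup>* \<and> dist R r u = dist R r v - 1"
proof -
  obtain m where m: "dist R r v = Suc m" using assms(2) gr0_implies_Suc by blast
  have "(v,r) \<in> R ^^ Suc m" using dist_ex[OF assms(1)] m by simp
  then obtain u where u: "(v,u) \<in> R" "(u,r) \<in> R ^^ m" by (meson relpow_Suc_D2)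
  have ur: "(u,r) \<in> R\<^sup>*" using u(2) relpow_imp_rtrancl by blast
  have "dist R r u \<le> m" using dist_le[OF u(2)] .
  moreover have "(v,r) \<in> R ^^ Suc (dist R r u)"
    using u(1) dist_ex[OF ur] by (meson relpow_Suc_I2)
  then have "Suc m \<le> Suc (dist R r u)" using dist_le m by metis
  ultimately show ?thesis using u(1) ur m by auto
qed

lemma noncut:
  assumes fin: "finite V" and con: "connected_graph V E" and c2: "2 \<le> card V"
  shows "\<exists>v\<in>V. connected_graph (V - {v}) E"
proof -
  let ?R = "adj_in E V"
  have ne: "V \<noteq> {}" using c2 by auto
  then obtain r where r: "r \<in> V" by blast
  have reach: "\<And>v. v \<in> V \<Longrightarrow> (v,r) \<in> ?R\<^sup>*" using con r unfolding connected_graph_def by blast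
  define d where "d = dist ?R r"
  have "Max (d ` V) \<in> d ` V" using fin ne by (intro Max_in) auto
  then obtain v where v1: "v \<in> V" "d v = Max (d ` V)" by auto
  have v: "v \<in> V" "\<forall>w\<in>V. d w \<le> d v" using v1 fin by (auto intro: Max_ge)
  have "\<exists>w\<in>V. w \<noteq> r"
  proof (rule ccontr)
    assume "\<not> ?thesis"
    then have "V \<subseteq> {r}" by auto
    then have "card V \<le> 1" using card_mono[of "{r}" V] by simp
    then show False using c2 by simp
  qed
  then obtain w where w: "w \<in> V" "w \<noteq> r" by blast
  have "d w \<noteq> 0" using dist_0[OF reach[OF w(1)]] w(2) unfolding d_def by blast
  then have "d w > 0" by simp
  then have dv: "d v > 0" using v(2) w(1) by (meson less_le_trans)
  have "d r = 0" unfolding d_def using dist_le[where v=r and r=r and n=0 and R="adj_in E V"] by simp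
  then have vr: "v \<noteq> r" using dv by auto
  have main: "\<forall>w\<in>V. w \<noteq> v \<longrightarrow> d w = n \<longrightarrow> (w,r) \<in> (adj_in E (V - {v}))\<^sup>*" for n
  proof (induction n)
    case 0
    show ?case
    proof (intro ballI impI)
      fix w assume "w \<in> V" "w \<noteq> v" "d w = 0"
      then have "w = r" using dist_0[OF reach[OF \<open>w \<in> V\<close>]] unfolding d_def by simp
      then show "(w,r) \<in> (adj_in E (V - {v}))\<^sup>*" by simp
    qed
  next
    case (Suc n)
    show ?case
    proof (intro ballI impI)
      fix w assume w: "w \<in> V" "w \<noteq> v" "d w = Suc n"
      obtain u where u: "(w,u) \<in> ?R" "(u,r) \<in> ?R\<^sup>*" "d u = d w - 1"
        using dist_step[OF reach[OF w(1)]] w(3) unfolding d_def by auto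
      have uV: "u \<in> V" using u(1) by (auto simp: adj_in_def)
      have "d w \<le> d v" using v(2) w(1) by blast
      then have "d u < d v" using u(3) w(3) by simp
      then have "u \<noteq> v" by auto
      then have "(w,u) \<in> adj_in E (V - {v})" using u(1) w(2) by (auto simp: adj_in_def)
      moreover have "d u = n" using u(3) w(3) by simp
      then have "(u,r) \<in> (adj_in E (V - {v}))\<^sup>*" using Suc.IH uV \<open>u \<noteq> v\<close> by simp
      ultimately show "(w,r) \<in> (adj_in E (V - {v}))\<^sup>*" by (meson converse_rtrancl_into_rtrancl)
    qed
  qed
  have "connected_graph (V - {v}) E"
    unfolding connected_graph_def
  proof (intro ballI)
    fix a b assume a: "a \<in> V - {v}" and b: "b \<in> V - {v}"
    have "(a,r) \<in> (adj_in E (V - {v}))\<^sup>*" using main[of "d a"] a by simp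
    moreover have "(b,r) \<in> (adj_in E (V - {v}))\<^sup>*" using main[of "d b"] b by simp
    then have "(r,b) \<in> (adj_in E (V - {v}))\<^sup>*" by (rule rt_sym)
    ultimately show "(a,b) \<in> (adj_in E (V - {v}))\<^sup>*" by (meson rtrancl_trans)
  qed
  then show ?thesis using v(1) by blast
qed




lemma conn_card:
  assumes fin: "finite V" "finite E" and con: "connected_graph V E"
  shows "card V \<le> Suc (card E)"
proof (cases "V = {}")
  case True then show ?thesis by simp
next
  case False
  let ?R = "adj_in E V"
  obtain r where r: "r \<in> V" using False by blast
  have reach: "\<And>v. v \<in> V \<Longrightarrow> (v,r) \<in> ?R\<^sup>*" using con r unfolding connected_graph_def by blast
  define d where "d = dist ?R r"
  have ex: "\<forall>v\<in>V - {r}. \<exists>u. (v,u) \<in> ?R \<and> d u = d v - 1 \<and> d v > 0"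
  proof
    fix v assume v: "v \<in> V - {r}"
    have "d v \<noteq> 0" using dist_0[OF reach] v unfolding d_def by blast
    then show "\<exists>u. (v,u) \<in> ?R \<and> d u = d v - 1 \<and> d v > 0"
      using dist_step[OF reach] v unfolding d_def by auto
  qed
  then obtain u where u: "\<forall>v\<in>V - {r}. (v, u v) \<in> ?R \<and> d (u v) = d v - 1 \<and> d v > 0"
    by metis
  define phi where "phi v = {v, u v}" for v
  have "inj_on phi (V - {r})"
  proof (rule inj_onI)
    fix a b assume a: "a \<in> V - {r}" and b: "b \<in> V - {r}" and eq: "phi a = phi b"
    show "a = b"
    proof (rule ccontr)
      assume ne: "a \<noteq> b"
      from eq have "{a, u a} = {b, u b}" unfolding phi_def .
      then have "a = u b" "b = u a" using ne by (auto simp: doubleton_eq_iff)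
      then show False using u a b by (metis diff_less less_asym zero_less_one)
    qed
  qed
  moreover have "phi ` (V - {r}) \<subseteq> E" using u unfolding phi_def adj_in_def by auto
  ultimately have "card (V - {r}) \<le> card E" using fin(2) card_inj_on_le by blast
  then show ?thesis using r fin(1) by simp
qed

lemma tree_finE: "is_tree V E \<Longrightarrow> finite E"
  unfolding is_tree_def by (meson PowI finite_Pow_iff finite_subset subsetI)

lemma bridge:
  assumes t: "is_tree V E" and e: "{a,b} \<in> E" and p: "(a,b) \<in> (adj_in (E - {{a,b}}) V)\<^sup>*"
  shows False
proof -
  let ?E' = "E - {{a,b}}"
  have fE: "finite E" using tree_finE[OF t] .
  have ab: "a \<in> V" "b \<in> V" using t e unfolding is_tree_def by auto
  have sub: "adj_in E V \<subseteq> (adj_in ?E' V)\<^sup>*"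
  proof
    fix q assume q: "q \<in> adj_in E V"
    then obtain c d where cd: "q = (c,d)" "{c,d} \<in> E" "c \<in> V" "d \<in> V" by (auto simp: adj_in_def)
    show "q \<in> (adj_in ?E' V)\<^sup>*"
    proof (cases "{c,d} = {a,b}")
      case True
      then have "(c = a \<and> d = b) \<or> (c = b \<and> d = a)" by (auto simp: doubleton_eq_iff)
      then show ?thesis using p rt_sym[OF p] cd(1) by auto
    next
      case False
      then have "(c,d) \<in> adj_in ?E' V" using cd by (auto simp: adj_in_def)
      then show ?thesis using cd(1) by auto
    qed
  qed
  have "connected_graph V ?E'"
    unfolding connected_graph_def
  proof (intro ballI)
    fix u w assume "u \<in> V" "w \<in> V"
    then have "(u,w) \<in> (adj_in E V)\<^sup>*" using t unfolding is_tree_def connected_graph_def by blast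
    then show "(u,w) \<in> (adj_in ?E' V)\<^sup>*" using rtrancl_subset_rtrancl[OF sub] by blast
  qed
  then have "card V \<le> Suc (card ?E')" using conn_card t fE unfolding is_tree_def by blast
  moreover have "card ?E' = card E - 1" using e fE by simp
  moreover have "E \<noteq> {}" using e by auto
  then have "card E \<ge> 1" using fE by (simp add: Suc_le_eq card_gt_0_iff)
  ultimately show False using t unfolding is_tree_def by simp
qed

fun wpairs :: "'a list \<Rightarrow> ('a \<times> 'a) list" where
  "wpairs (a # b # xs) = (a, b) # wpairs (b # xs)"
| "wpairs _ = []"

definition wedges :: "'a list \<Rightarrow> 'a set set" where
  "wedges w = (\<lambda>(a,b). {a,b}) ` set (wpairs w)"

lemma wpairs_cons: "w \<noteq> [] \<Longrightarrow> wpairs (v # w) = (v, hd w) # wpairs w"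
  by (cases w) auto

lemma wpairs_snoc: "w \<noteq> [] \<Longrightarrow> wpairs (w @ [v]) = wpairs w @ [(last w, v)]"
  by (induction w rule: wpairs.induct) auto

lemma wpairs_change: "w \<noteq> [] \<Longrightarrow> g (hd w) \<noteq> g (last w) \<Longrightarrow> \<exists>(a,b)\<in>set (wpairs w). g a \<noteq> g b"
  by (induction w rule: wpairs.induct) auto

lemma wedges_avoid: "set (wpairs w) \<subseteq> adj_in E V' \<Longrightarrow> v \<notin> V' \<Longrightarrow> e \<in> wedges w \<Longrightarrow> v \<notin> e"
  unfolding wedges_def adj_in_def by auto




definition paired where
  "paired E V S h ws \<longleftrightarrow> 2 * card {s\<in>S. h s} = card S \<and> 2 * length ws = card S \<and>
    (\<forall>w\<in>set ws. w \<noteq> [] \<and> hd w \<in> S \<and> last w \<in> S \<and> h (hd w) \<noteq> h (last w) \<and> set (wpairs w) \<subseteq> adj_in E V) \<and>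
    (\<forall>s\<in>S. \<exists>w\<in>set ws. s = hd w \<or> s = last w) \<and>
    (\<forall>i<length ws. \<forall>j<length ws. i \<noteq> j \<longrightarrow> {hd (ws!i), last (ws!i)} \<inter> {hd (ws!j), last (ws!j)} = {}) \<and>
    (\<forall>i<length ws. \<forall>j<length ws. i \<noteq> j \<longrightarrow> wedges (ws!i) \<inter> wedges (ws!j) = {})"

lemma paired_mono: "paired E V' S h ws \<Longrightarrow> V' \<subseteq> V \<Longrightarrow> paired E V S h ws"
proof -
  assume p: "paired E V' S h ws" and s: "V' \<subseteq> V"
  have m: "adj_in E V' \<subseteq> adj_in E V" using adj_in_mono[OF s] .
  show ?thesis using p unfolding paired_def
    apply (elim conjE)
    apply (intro conjI)
    using m by (assumption | fastforce)+
qed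

lemma paired_add2:
  assumes p: "paired E V' S' h ws" and v: "v \<notin> V'" and u: "u \<in> V'" "u \<notin> S'"
    and vu: "(v,u) \<in> adj_in E V" and sub: "V' \<subseteq> V" "S' \<subseteq> V'" and fin: "finite S'"
  shows "paired E V (insert v (insert u S')) (h(v:=True, u:=False)) ([v,u] # ws)"
proof -
  let ?h = "h(v:=True, u:=False)"
  let ?S = "insert v (insert u S')"
  have vu': "v \<noteq> u" using v u by auto
  have vS: "v \<notin> S'" using v sub by auto
  have cS: "card ?S = card S' + 2" using fin vS u vu' by simp
  have "{s\<in>?S. ?h s} = insert v {s\<in>S'. h s}" using vS u vu' by auto
  then have cT: "card {s\<in>?S. ?h s} = card {s\<in>S'. h s} + 1" using fin vS by simp
  have walks: "\<forall>w\<in>set ws. w \<noteq> [] \<and> hd w \<in> S' \<and> last w \<in> S' \<and> h (hd w) \<noteq> h (last w) \<and> set (wpairs w) \<subseteq> adj_in E V'"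
    using p unfolding paired_def by blast
  have hsame: "\<And>s. s \<in> S' \<Longrightarrow> ?h s = h s" using vS u by auto
  have W1: "\<forall>w\<in>set ([v,u] # ws). w \<noteq> [] \<and> hd w \<in> ?S \<and> last w \<in> ?S \<and> ?h (hd w) \<noteq> ?h (last w) \<and> set (wpairs w) \<subseteq> adj_in E V"
  proof
    fix w assume "w \<in> set ([v,u] # ws)"
    then consider "w = [v,u]" | "w \<in> set ws" by auto
    then show "w \<noteq> [] \<and> hd w \<in> ?S \<and> last w \<in> ?S \<and> ?h (hd w) \<noteq> ?h (last w) \<and> set (wpairs w) \<subseteq> adj_in E V"
    proof cases
      case 1 then show ?thesis using vu vu' by simp
    next
      case 2
      then have "w \<noteq> [] \<and> hd w \<in> S' \<and> last w \<in> S' \<and> h (hd w) \<noteq> h (last w) \<and> set (wpairs w) \<subseteq> adj_in E V'"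
        using walks by blast
      then show ?thesis using hsame adj_in_mono[OF sub(1)] by auto
    qed
  qed
  have cov: "\<forall>s\<in>S'. \<exists>w\<in>set ws. s = hd w \<or> s = last w" using p unfolding paired_def by blast
  have W2: "\<forall>s\<in>?S. \<exists>w\<in>set ([v,u] # ws). s = hd w \<or> s = last w"
  proof
    fix s assume "s \<in> ?S"
    then consider "s = v" | "s = u" | "s \<in> S'" by blast
    then show "\<exists>w\<in>set ([v,u] # ws). s = hd w \<or> s = last w"
    proof cases
      case 3 then show ?thesis using cov by fastforce
    qed auto
  qed
  have endp: "v \<notin> {hd (ws!j), last (ws!j)} \<and> u \<notin> {hd (ws!j), last (ws!j)}" if j: "j < length ws" for j
  proof -
    have "ws!j \<in> set ws" using j by simp
    then have "hd (ws!j) \<in> S'" "last (ws!j) \<in> S'" using walks by blast+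
    then show ?thesis using vS u(2) by auto
  qed
  have edg: "{v,u} \<notin> wedges (ws!j)" if j: "j < length ws" for j
  proof
    assume a: "{v,u} \<in> wedges (ws!j)"
    have "ws!j \<in> set ws" using j by simp
    then have "set (wpairs (ws!j)) \<subseteq> adj_in E V'" using walks by blast
    then have "v \<notin> {v,u}" using wedges_avoid[OF _ v a] by blast
    then show False by simp
  qed
  have DE: "\<forall>i<length ws. \<forall>j<length ws. i \<noteq> j \<longrightarrow> {hd (ws!i), last (ws!i)} \<inter> {hd (ws!j), last (ws!j)} = {}"
    and DJ: "\<forall>i<length ws. \<forall>j<length ws. i \<noteq> j \<longrightarrow> wedges (ws!i) \<inter> wedges (ws!j) = {}"
    using p unfolding paired_def by blast+
  have W3: "\<forall>i<length ([v,u] # ws). \<forall>j<length ([v,u] # ws). i \<noteq> j \<longrightarrow>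
     {hd (([v,u] # ws)!i), last (([v,u] # ws)!i)} \<inter> {hd (([v,u] # ws)!j), last (([v,u] # ws)!j)} = {}"
  proof (intro allI impI)
    fix i j assume ij: "i < length ([v,u] # ws)" "j < length ([v,u] # ws)" "i \<noteq> j"
    show "{hd (([v,u] # ws)!i), last (([v,u] # ws)!i)} \<inter> {hd (([v,u] # ws)!j), last (([v,u] # ws)!j)} = {}"
    proof (cases i)
      case 0
      then obtain j' where "j = Suc j'" "j' < length ws" using ij by (cases j) auto
      then show ?thesis using 0 endp[of j'] by auto
    next
      case (Suc i')
      show ?thesis
      proof (cases j)
        case 0 then show ?thesis using Suc ij endp[of i'] by auto
      next
        case (Suc j')
        then show ?thesis using \<open>i = Suc i'\<close> ij DE by simp
      qed
    qed
  qed
  have W4: "\<forall>i<length ([v,u] # ws). \<forall>j<length ([v,u] # ws). i \<noteq> j \<longrightarrow>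
     wedges (([v,u] # ws)!i) \<inter> wedges (([v,u] # ws)!j) = {}"
  proof (intro allI impI)
    fix i j assume ij: "i < length ([v,u] # ws)" "j < length ([v,u] # ws)" "i \<noteq> j"
    have w0: "wedges [v,u] = {{v,u}}" unfolding wedges_def by simp
    show "wedges (([v,u] # ws)!i) \<inter> wedges (([v,u] # ws)!j) = {}"
    proof (cases i)
      case 0
      then obtain j' where "j = Suc j'" "j' < length ws" using ij by (cases j) auto
      then show ?thesis using 0 edg[of j'] w0 by auto
    next
      case (Suc i')
      show ?thesis
      proof (cases j)
        case 0 then show ?thesis using Suc ij edg[of i'] w0 by auto
      next
        case (Suc j')
        then show ?thesis using \<open>i = Suc i'\<close> ij DJ by simp
      qed
    qed
  qed
  have c0: "2 * card {s\<in>S'. h s} = card S'" and l0: "2 * length ws = card S'"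
    using p unfolding paired_def by blast+
  have c1: "2 * card {s\<in>?S. ?h s} = card ?S" using cS cT c0 by simp
  have l1: "2 * length ([v,u] # ws) = card ?S" using cS l0 by simp
  show ?thesis unfolding paired_def
    using c1 l1 W1 W2 W3 W4 by blast
qed

lemma paired_ext:
  assumes p: "paired E V' S' h ws" and v: "v \<notin> V'" and u: "u \<in> S'"
    and vu: "(v,u) \<in> adj_in E V" and sub: "V' \<subseteq> V" "S' \<subseteq> V'" and fin: "finite S'"
  shows "\<exists>h2 ws2. paired E V (insert v (S' - {u})) h2 ws2"
proof -
  have c0: "2 * card {s\<in>S'. h s} = card S'" and l0: "2 * length ws = card S'"
    and walks: "\<forall>w\<in>set ws. w \<noteq> [] \<and> hd w \<in> S' \<and> last w \<in> S' \<and> h (hd w) \<noteq> h (last w) \<and> set (wpairs w) \<subseteq> adj_in E V'"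
    and cov: "\<forall>s\<in>S'. \<exists>w\<in>set ws. s = hd w \<or> s = last w"
    and DE: "\<forall>i<length ws. \<forall>j<length ws. i \<noteq> j \<longrightarrow> {hd (ws!i), last (ws!i)} \<inter> {hd (ws!j), last (ws!j)} = {}"
    and DJ: "\<forall>i<length ws. \<forall>j<length ws. i \<noteq> j \<longrightarrow> wedges (ws!i) \<inter> wedges (ws!j) = {}"
    using p unfolding paired_def by blast+
  have m: "adj_in E V' \<subseteq> adj_in E V" using adj_in_mono[OF sub(1)] .
  have vS: "v \<notin> S'" using v sub by auto
  obtain w0 where w0: "w0 \<in> set ws" "u = hd w0 \<or> u = last w0" using cov u by blast
  then obtain i where i: "i < length ws" "ws ! i = w0" by (auto simp: in_set_conv_nth)
  define w where "w = ws ! i"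
  have "w \<in> set ws" unfolding w_def using i(1) by simp
  then have wp: "w \<noteq> []" "hd w \<in> S'" "last w \<in> S'" "h (hd w) \<noteq> h (last w)" "set (wpairs w) \<subseteq> adj_in E V'"
    using walks by blast+
  have uw: "u = hd w \<or> u = last w" using w0 i w_def by simp
  define oth where "oth = (if u = hd w then last w else hd w)"
  define w' where "w' = (if u = hd w then v # w else w @ [v])"
  have cf: "(u = hd w \<and> w' = v # w \<and> oth = last w) \<or> (u \<noteq> hd w \<and> u = last w \<and> w' = w @ [v] \<and> oth = hd w)"
    using uw unfolding w'_def oth_def by auto
  have hne: "hd w \<noteq> last w" using wp(4) by auto
  have hl: "{hd w', last w'} = {v, oth}" "{hd w, last w} = {u, oth}"
    using cf wp(1) by (elim disjE; simp add: insert_commute)+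
  have oth: "oth \<in> S'" "oth \<noteq> u" "h u \<noteq> h oth"
    using cf wp(2,3,4) hne by (elim disjE; simp)+
  have othv: "oth \<noteq> v" using oth(1) vS by auto
  have wedge': "wedges w' = insert {v,u} (wedges w)"
    using cf wp(1) unfolding wedges_def by (elim disjE; simp add: wpairs_cons wpairs_snoc insert_commute)
  have pairs': "set (wpairs w') \<subseteq> adj_in E V"
  proof -
    have "set (wpairs w) \<subseteq> adj_in E V" using wp(5) m by blast
    then show ?thesis using cf wp(1) vu adj_in_sym[OF vu] by (elim disjE; simp add: wpairs_cons wpairs_snoc)
  qed
  define h2 where "h2 = h(v := h u)"
  define ws2 where "ws2 = ws[i := w']"
  let ?S = "insert v (S' - {u})"
  have len: "length ws2 = length ws" unfolding ws2_def by simp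
  have "card S' > 0" using fin u card_gt_0_iff by blast
  then have cS: "card ?S = card S'" using fin vS u by simp
  have h2S: "\<And>s. s \<in> S' \<Longrightarrow> h2 s = h s" using vS unfolding h2_def by auto
  have cnt: "{s\<in>?S. h2 s} = (\<lambda>s. if s = u then v else s) ` {s\<in>S'. h s}"
  proof
    show "{s\<in>?S. h2 s} \<subseteq> (\<lambda>s. if s = u then v else s) ` {s\<in>S'. h s}"
    proof
      fix s assume s: "s \<in> {s\<in>?S. h2 s}"
      show "s \<in> (\<lambda>s. if s = u then v else s) ` {s\<in>S'. h s}"
      proof (cases "s = v")
        case True
        then have "h u" using s unfolding h2_def by simp
        then show ?thesis using True u by (auto intro!: image_eqI[of _ _ u])
      next
        case False
        then have "s \<in> S'" "s \<noteq> u" "h s" using s h2S by auto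
        then show ?thesis by (auto intro!: image_eqI[of _ _ s])
      qed
    qed
    show "(\<lambda>s. if s = u then v else s) ` {s\<in>S'. h s} \<subseteq> {s\<in>?S. h2 s}"
      using h2S vS unfolding h2_def by auto
  qed
  have "inj_on (\<lambda>s. if s = u then v else s) {s\<in>S'. h s}"
    using vS by (auto simp: inj_on_def)
  then have cT: "card {s\<in>?S. h2 s} = card {s\<in>S'. h s}" unfolding cnt by (rule card_image)
  have nth2: "\<And>q. q < length ws \<Longrightarrow> ws2 ! q = (if q = i then w' else ws ! q)"
    unfolding ws2_def using i(1) by auto
  have other: "v \<notin> {hd (ws!q), last (ws!q)} \<and> {v,u} \<notin> wedges (ws!q) \<and>
      hd (ws!q) \<in> S' \<and> last (ws!q) \<in> S' \<and> h (hd (ws!q)) \<noteq> h (last (ws!q)) \<and> ws!q \<noteq> [] \<and>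
      set (wpairs (ws!q)) \<subseteq> adj_in E V'" if q: "q < length ws" for q
  proof -
    have "ws!q \<in> set ws" using q by simp
    then have a: "ws!q \<noteq> []" "hd (ws!q) \<in> S'" "last (ws!q) \<in> S'" "h (hd (ws!q)) \<noteq> h (last (ws!q))"
        "set (wpairs (ws!q)) \<subseteq> adj_in E V'" using walks by blast+
    have "{v,u} \<notin> wedges (ws!q)"
    proof
      assume b: "{v,u} \<in> wedges (ws!q)"
      have "v \<notin> {v,u}" using wedges_avoid[OF a(5) v b] .
      then show False by simp
    qed
    then show ?thesis using a vS by auto
  qed
  have W1: "\<forall>w\<in>set ws2. w \<noteq> [] \<and> hd w \<in> ?S \<and> last w \<in> ?S \<and> h2 (hd w) \<noteq> h2 (last w) \<and> set (wpairs w) \<subseteq> adj_in E V"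
  proof
    fix x assume "x \<in> set ws2"
    then obtain q where q: "q < length ws" "x = ws2 ! q" using len by (auto simp: in_set_conv_nth)
    show "x \<noteq> [] \<and> hd x \<in> ?S \<and> last x \<in> ?S \<and> h2 (hd x) \<noteq> h2 (last x) \<and> set (wpairs x) \<subseteq> adj_in E V"
    proof (cases "q = i")
      case True
      then have x: "x = w'" using q nth2 by simp
      have "x \<noteq> []" using x unfolding w'_def by auto
      moreover have "{hd x, last x} \<subseteq> ?S" using x hl oth by auto
      moreover have "h2 (hd x) \<noteq> h2 (last x)"
      proof -
        have "(hd x = v \<and> last x = oth) \<or> (hd x = oth \<and> last x = v)" using x hl(1) othv
          by (metis doubleton_eq_iff)
        then show ?thesis using oth(3) h2S[OF oth(1)] unfolding h2_def by auto
      qed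
      ultimately show ?thesis using pairs' x by auto
    next
      case False
      then have x: "x = ws ! q" using q nth2 by simp
      have e: "{hd x, last x} \<inter> {u, oth} = {}" using DE q(1) i(1) False hl(2) x unfolding w_def by auto
      then show ?thesis using other[OF q(1)] x h2S m by auto
    qed
  qed
  have W2: "\<forall>s\<in>?S. \<exists>w\<in>set ws2. s = hd w \<or> s = last w"
  proof
    fix s assume s: "s \<in> ?S"
    have "ws2 ! i = w'" using i(1) nth2[of i] by simp
    then have wi: "w' \<in> set ws2" using i(1) len by (metis nth_mem)
    show "\<exists>w\<in>set ws2. s = hd w \<or> s = last w"
    proof (cases "s = v")
      case True then show ?thesis using wi hl(1) by blast
    next
      case False
      then have s': "s \<in> S'" "s \<noteq> u" using s by auto
      then obtain x where x: "x \<in> set ws" "s = hd x \<or> s = last x" using cov by blast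
      then obtain q where q: "q < length ws" "x = ws ! q" by (auto simp: in_set_conv_nth)
      show ?thesis
      proof (cases "q = i")
        case True
        then have "s = oth" using x q hl(2) s'(2) unfolding w_def by auto
        then show ?thesis using wi hl(1) by blast
      next
        case False
        then have "ws2 ! q = x" using nth2 q by simp
        moreover have "ws2 ! q \<in> set ws2" using len q by simp
        ultimately show ?thesis using x by auto
      qed
    qed
  qed
  have W3: "\<forall>p<length ws2. \<forall>q<length ws2. p \<noteq> q \<longrightarrow> {hd (ws2!p), last (ws2!p)} \<inter> {hd (ws2!q), last (ws2!q)} = {}"
  proof (intro allI impI)
    fix p q assume pq: "p < length ws2" "q < length ws2" "p \<noteq> q"
    have gen: "{hd (ws2!a), last (ws2!a)} \<inter> {hd (ws2!b), last (ws2!b)} = {}"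
      if ab: "a < length ws" "b < length ws" "a \<noteq> b" "a = i" for a b
    proof -
      have "ws2 ! a = w'" "ws2 ! b = ws ! b" using nth2 ab by auto
      moreover have "{hd (ws!b), last (ws!b)} \<inter> {u, oth} = {}" using DE ab hl(2) unfolding w_def by auto
      moreover have "v \<notin> {hd (ws!b), last (ws!b)}" using other ab by blast
      ultimately show ?thesis using hl(1) by auto
    qed
    show "{hd (ws2!p), last (ws2!p)} \<inter> {hd (ws2!q), last (ws2!q)} = {}"
    proof (cases "p = i \<or> q = i")
      case True
      then show ?thesis
      proof
        assume "p = i" then show ?thesis using gen[of p q] pq len by simp
      next
        assume "q = i" then show ?thesis using gen[of q p] pq len by (simp add: inf_commute)
      qed
    next
      case False
      then have "ws2!p = ws!p" "ws2!q = ws!q" using nth2 pq len by auto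
      then show ?thesis using DE[rule_format, of p q] pq len by simp
    qed
  qed
  have W4: "\<forall>p<length ws2. \<forall>q<length ws2. p \<noteq> q \<longrightarrow> wedges (ws2!p) \<inter> wedges (ws2!q) = {}"
  proof (intro allI impI)
    fix p q assume pq: "p < length ws2" "q < length ws2" "p \<noteq> q"
    have gen: "wedges (ws2!a) \<inter> wedges (ws2!b) = {}"
      if ab: "a < length ws" "b < length ws" "a \<noteq> b" "a = i" for a b
    proof -
      have "ws2 ! a = w'" "ws2 ! b = ws ! b" using nth2 ab by auto
      moreover have "wedges w \<inter> wedges (ws!b) = {}" using DJ ab unfolding w_def by auto
      moreover have "{v,u} \<notin> wedges (ws!b)" using other ab by blast
      ultimately show ?thesis using wedge' by auto
    qed
    show "wedges (ws2!p) \<inter> wedges (ws2!q) = {}"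
    proof (cases "p = i \<or> q = i")
      case True
      then show ?thesis
      proof
        assume "p = i" then show ?thesis using gen[of p q] pq len by simp
      next
        assume "q = i" then show ?thesis using gen[of q p] pq len by (simp add: inf_commute)
      qed
    next
      case False
      then have "ws2!p = ws!p" "ws2!q = ws!q" using nth2 pq len by auto
      then show ?thesis using DJ[rule_format, of p q] pq len by simp
    qed
  qed
  have c1: "2 * card {s\<in>?S. h2 s} = card ?S" using cS cT c0 by simp
  have l1: "2 * length ws2 = card ?S" using cS l0 len by simp
  have "paired E V ?S h2 ws2" unfolding paired_def
    using c1 l1 W1 W2 W3 W4 by blast
  then show ?thesis by blast
qed


lemma pair:
  assumes "finite V" "connected_graph V E" "\<forall>e\<in>E. card e = 2" "S \<subseteq> V" "even (card S)"
  shows "\<exists>h ws. paired E V S h ws"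
  using assms
proof (induction "card V" arbitrary: V S rule: less_induct)
  case less
  have finS: "finite S" using less.prems(1,4) finite_subset by blast
  show ?case
  proof (cases "card V \<le> 1")
    case True
    then have "card S \<le> 1" using card_mono[OF less.prems(1,4)] by simp
    then have "card S = 0" using less.prems(5) by presburger
    then have S: "S = {}" using finS by simp
    have "paired E V S (\<lambda>_. True) []" unfolding paired_def S by simp
    then show ?thesis by blast
  next
    case False
    then obtain v where v: "v \<in> V" "connected_graph (V - {v}) E"
      using noncut[OF less.prems(1,2)] by auto
    let ?V' = "V - {v}"
    have lt: "card ?V' < card V" by (rule card_Diff1_less[OF less.prems(1) v(1)])
    have fV': "finite ?V'" using less.prems(1) by simp
    have IH: "\<And>S'. S' \<subseteq> ?V' \<Longrightarrow> even (card S') \<Longrightarrow> \<exists>h ws. paired E ?V' S' h ws"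
      using less.hyps[OF lt fV' v(2) less.prems(3)] by blast
    have "?V' \<noteq> {}" using False v(1) by (metis card_Diff_singleton_if card_eq_0_iff diff_is_0_eq
          less.prems(1) nat_le_linear not_one_le_zero)
    then obtain z where z: "z \<in> ?V'" by blast
    then have "(v,z) \<in> (adj_in E V)\<^sup>*" using v(1) less.prems(2) unfolding connected_graph_def by blast
    moreover have "v \<noteq> z" using z by auto
    ultimately obtain u where vu: "(v,u) \<in> adj_in E V" by (meson converse_rtranclE)
    have uv: "u \<noteq> v"
    proof
      assume "u = v"
      then have "{v} \<in> E" using vu by (auto simp: adj_in_def)
      then show False using less.prems(3) by fastforce
    qed
    have uV: "u \<in> ?V'" using vu uv by (auto simp: adj_in_def)
    have sub: "?V' \<subseteq> V" by blast
    show ?thesis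
    proof (cases "v \<in> S")
      case False
      then obtain h ws where "paired E ?V' S h ws" using IH less.prems(4) less.prems(5) by blast
      then show ?thesis using paired_mono[OF _ sub] by blast
    next
      case vS: True
      show ?thesis
      proof (cases "u \<in> S")
        case True
        let ?S' = "S - {v, u}"
        have cS': "card ?S' = card S - 2" using finS vS True uv by (simp add: card_Diff_subset)
        have "card S \<ge> 2" using finS vS True uv
          by (metis card_2_iff card_mono empty_subsetI insert_subset)
        then have "even (card ?S')" using cS' less.prems(5) by simp
        moreover have "?S' \<subseteq> ?V'" using less.prems(4) by blast
        ultimately obtain h ws where p: "paired E ?V' ?S' h ws" using IH by blast
        have "paired E V (insert v (insert u ?S')) (h(v:=True, u:=False)) ([v,u] # ws)"
          by (rule paired_add2[OF p _ uV _ vu sub]) (use less.prems(4) finS in auto)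
        moreover have "insert v (insert u ?S') = S" using vS True by auto
        ultimately show ?thesis by metis
      next
        case False
        let ?S' = "insert u (S - {v})"
        have "card ?S' = card S" using finS vS False
          by (simp add: card_gt_0_iff) (metis card_gt_0_iff empty_iff Suc_pred)
        then have "even (card ?S')" using less.prems(5) by simp
        moreover have "?S' \<subseteq> ?V'" using less.prems(4) uV by blast
        ultimately obtain h ws where p: "paired E ?V' ?S' h ws" using IH by blast
        have "\<exists>h2 ws2. paired E V (insert v (?S' - {u})) h2 ws2"
          by (rule paired_ext[OF p _ _ vu sub]) (use less.prems(4) finS uV in auto)
        moreover have "insert v (?S' - {u}) = S" using vS False by auto
        ultimately show ?thesis by metis
      qed
    qed
  qed
qed

lemma pair2:
  assumes "finite V" "connected_graph V E" "\<forall>e\<in>E. card e = 2" "S \<subseteq> V" "even (card S)" "s0 \<in> S"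
  shows "\<exists>h ws. paired E V S h ws \<and> h s0"
proof -
  obtain h ws where p: "paired E V S h ws" using pair[OF assms(1-5)] by blast
  show ?thesis
  proof (cases "h s0")
    case True then show ?thesis using p by blast
  next
    case False
    have finS: "finite S" using assms(1,4) finite_subset by blast
    have "{s\<in>S. \<not> h s} = S - {s\<in>S. h s}" by blast
    then have "card {s\<in>S. \<not> h s} = card S - card {s\<in>S. h s}"
      using finS by (simp add: card_Diff_subset)
    moreover have "2 * card {s\<in>S. h s} = card S" using p unfolding paired_def by blast
    ultimately have "2 * card {s\<in>S. \<not> h s} = card S" by linarith
    then have "2 * card {s\<in>S. (Not \<circ> h) s} = card S" by (simp add: comp_def)
    then have "paired E V S (Not \<circ> h) ws" using p unfolding paired_def by simp
    then show ?thesis using False by auto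
  qed
qed




lemma changes_le: assumes "finite E" shows "changes E g \<le> card E"
  unfolding changes_def by (rule card_mono[OF assms Collect_subset])

lemma pars_fin: "finite E \<Longrightarrow> finite {changes E g | g. \<forall>x\<in>X. g x = f x}"
proof -
  assume "finite E"
  then have "{changes E g | g. \<forall>x\<in>X. g x = f x} \<subseteq> {..card E}" using changes_le by auto
  then show ?thesis using finite_subset by blast
qed

lemma pars_le: assumes "finite E" "\<forall>x\<in>X. g x = f x" shows "parsimony X E f \<le> changes E g"
proof -
  have "changes E g \<in> {changes E g | g. \<forall>x\<in>X. g x = f x}" using assms(2) by blast
  then show ?thesis unfolding parsimony_def by (rule Min_le[OF pars_fin[OF assms(1)]])
qed

lemma wpairs_change2: assumes "w \<noteq> []" "g (hd w) \<noteq> g (last w)"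
  shows "\<exists>a b. (a,b) \<in> set (wpairs w) \<and> g a \<noteq> g b"
  using wpairs_change[OF assms] by auto

lemma lower:
  assumes finE: "finite E"
    and W: "\<forall>w\<in>set ws. w \<noteq> [] \<and> hd w \<in> X \<and> last w \<in> X \<and> f (hd w) \<noteq> f (last w) \<and> (\<forall>(a,b)\<in>set (wpairs w). {a,b} \<in> E)"
    and D: "\<forall>i<length ws. \<forall>j<length ws. i \<noteq> j \<longrightarrow> wedges (ws!i) \<inter> wedges (ws!j) = {}"
  shows "length ws \<le> parsimony X E f"
proof -
  let ?A = "{changes E g | g. \<forall>x\<in>X. g x = f x}"
  have "changes E f \<in> ?A" by (rule CollectI, rule exI[of _ f]) simp
  then have ne: "?A \<noteq> {}" by blast
  have "\<forall>a\<in>?A. length ws \<le> a"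
  proof
    fix a assume "a \<in> ?A"
    then obtain g where g: "a = changes E g" "\<forall>x\<in>X. g x = f x"
      unfolding mem_Collect_eq by (elim exE conjE) blast
    let ?C = "{e \<in> E. \<exists>u v. e = {u, v} \<and> g u \<noteq> g v}"
    have ex: "\<exists>e. e \<in> wedges (ws!i) \<and> e \<in> ?C" if i: "i < length ws" for i
    proof -
      have wi: "ws!i \<in> set ws" using i by simp
      have wc: "ws!i \<noteq> [] \<and> hd (ws!i) \<in> X \<and> last (ws!i) \<in> X \<and> f (hd (ws!i)) \<noteq> f (last (ws!i)) \<and>
        (\<forall>(a,b)\<in>set (wpairs (ws!i)). {a,b} \<in> E)" using bspec[OF W wi] .
      then have w: "ws!i \<noteq> []" "hd (ws!i) \<in> X" "last (ws!i) \<in> X" "f (hd (ws!i)) \<noteq> f (last (ws!i))"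
        "\<forall>(a,b)\<in>set (wpairs (ws!i)). {a,b} \<in> E" using wc by simp_all
      have "g (hd (ws!i)) = f (hd (ws!i))" "g (last (ws!i)) = f (last (ws!i))"
        using bspec[OF g(2) w(2)] bspec[OF g(2) w(3)] .
      then have "g (hd (ws!i)) \<noteq> g (last (ws!i))" using w(4) by simp
      from wpairs_change2[OF w(1) this] obtain p q where pq: "(p,q) \<in> set (wpairs (ws!i))" "g p \<noteq> g q"
        by blast
      have "{p,q} \<in> wedges (ws!i)" using pq(1) unfolding wedges_def by (rule rev_image_eqI) simp
      moreover have "{p,q} \<in> E" using bspec[OF w(5) pq(1)] by simp
      then have "{p,q} \<in> ?C" using pq(2) by blast
      ultimately show ?thesis by blast
    qed
    define phi where "phi i = (SOME e. e \<in> wedges (ws!i) \<and> e \<in> ?C)" for i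
    have phi: "phi i \<in> wedges (ws!i) \<and> phi i \<in> ?C" if "i < length ws" for i
      unfolding phi_def using someI_ex[OF ex[OF that]] .
    have "inj_on phi {..<length ws}"
    proof (rule inj_onI)
      fix i j assume i: "i \<in> {..<length ws}" and j: "j \<in> {..<length ws}" and e: "phi i = phi j"
      show "i = j"
      proof (rule ccontr)
        assume "i \<noteq> j"
        then have dj: "wedges (ws!i) \<inter> wedges (ws!j) = {}" using D i j by simp
        have "i < length ws" "j < length ws" using i j by auto
        then have "phi i \<in> wedges (ws!i)" "phi j \<in> wedges (ws!j)" using phi by blast+
        then have "phi i \<in> wedges (ws!i) \<inter> wedges (ws!j)" using e by simp
        then show False using dj by simp
      qed
    qed
    moreover have "phi ` {..<length ws} \<subseteq> ?C"
    proof
      fix e assume "e \<in> phi ` {..<length ws}"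
      then obtain i where "i < length ws" "e = phi i" by auto
      then show "e \<in> ?C" using phi by blast
    qed
    moreover have "finite ?C" using finE by simp
    ultimately have "card {..<length ws} \<le> card ?C" using card_inj_on_le by blast
    then show "length ws \<le> a" using g(1) unfolding changes_def by simp
  qed
  then show ?thesis unfolding parsimony_def by (subst Min_ge_iff[OF pars_fin[OF finE] ne])
qed

lemma upper:
  assumes finE: "finite E" and finD: "finite D" and g: "\<forall>v. v \<notin> D \<longrightarrow> g v = c"
  shows "changes E g \<le> (\<Sum>d\<in>D. degree E d)"
proof -
  let ?C = "{e \<in> E. \<exists>u v. e = {u, v} \<and> g u \<noteq> g v}"
  have "?C \<subseteq> (\<Union>d\<in>D. {e\<in>E. d \<in> e})"
  proof
    fix e assume "e \<in> ?C"
    then obtain u v where e: "e \<in> E" "e = {u,v}" "g u \<noteq> g v" by blast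
    have "u \<in> D \<or> v \<in> D"
    proof (rule ccontr)
      assume "\<not> (u \<in> D \<or> v \<in> D)"
      then have "g u = c" "g v = c" using g by auto
      then show False using e(3) by simp
    qed
    then show "e \<in> (\<Union>d\<in>D. {e\<in>E. d \<in> e})" using e by auto
  qed
  then have "card ?C \<le> card (\<Union>d\<in>D. {e\<in>E. d \<in> e})"
    by (rule card_mono[rotated]) (use finE finD in auto)
  also have "\<dots> \<le> (\<Sum>d\<in>D. card {e\<in>E. d \<in> e})" by (rule card_UN_le[OF finD])
  finally show ?thesis unfolding changes_def degree_def .
qed


lemma bp_facts:
  assumes "binary_phylo_tree X V E"
  shows "is_tree V E" "finite V" "finite E" "\<And>e. e \<in> E \<Longrightarrow> e \<subseteq> V \<and> card e = 2"
    "X \<subseteq> V" "finite X" "\<And>z. z \<in> X \<longleftrightarrow> z \<in> V \<and> degree E z = 1"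
    "\<And>v. v \<in> V \<Longrightarrow> degree E v \<le> 3" "connected_graph V E"
proof -
  show t: "is_tree V E" using assms unfolding binary_phylo_tree_def by blast
  show "finite V" using t unfolding is_tree_def by blast
  show "finite E" using tree_finE[OF t] .
  show "\<And>e. e \<in> E \<Longrightarrow> e \<subseteq> V \<and> card e = 2" using t unfolding is_tree_def by blast
  show xv: "X \<subseteq> V" using assms unfolding binary_phylo_tree_def by blast
  show "finite X" using xv \<open>finite V\<close> finite_subset by blast
  have "X = {v \<in> V. degree E v = 1}" using assms unfolding binary_phylo_tree_def by blast
  then show "\<And>z. z \<in> X \<longleftrightarrow> z \<in> V \<and> degree E z = 1" by blast
  show "\<And>v. v \<in> V \<Longrightarrow> degree E v \<le> 3" using assms unfolding binary_phylo_tree_def by blast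
  show "connected_graph V E" using t unfolding is_tree_def by blast
qed

lemma leaf_edge:
  assumes "binary_phylo_tree X V E" "x \<in> X" "{x,w} \<in> E" "e \<in> E" "x \<in> e"
  shows "e = {x,w}"
proof -
  have "degree E x = 1" using bp_facts(7)[OF assms(1), of x] assms(2) by simp
  then have "card {e \<in> E. x \<in> e} = 1" unfolding degree_def .
  then obtain a where a: "{e \<in> E. x \<in> e} = {a}" by (rule card_1_singletonE)
  have "{x,w} \<in> {e \<in> E. x \<in> e}" using assms(3) by simp
  then have 1: "{x,w} = a" using a by simp
  have "e \<in> {e \<in> E. x \<in> e}" using assms(4,5) by simp
  then have "e = a" using a by simp
  then show ?thesis using 1 by simp
qed

lemma deg2:
  assumes fin: "finite E" and "e1 \<in> E" "e2 \<in> E" "e1 \<noteq> e2" "v \<in> e1" "v \<in> e2"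
  shows "degree E v \<ge> 2"
proof -
  have "{e1, e2} \<subseteq> {e \<in> E. v \<in> e}" using assms by auto
  moreover have "finite {e \<in> E. v \<in> e}" using fin by simp
  ultimately have "card {e1,e2} \<le> card {e \<in> E. v \<in> e}" by (rule card_mono[rotated])
  then show ?thesis unfolding degree_def using assms(4) by simp
qed

lemma cherry_bound:
  assumes bp: "binary_phylo_tree X V E" and ch: "is_cherry X V E x y"
    and fx: "f x" and fy: "f y" and ck: "card {z\<in>X. f z} = k"
  shows "parsimony X E f < k"
proof -
  note B = bp_facts[OF bp]
  obtain w where w: "w \<in> V" "{x,w} \<in> E" "{y,w} \<in> E" and xy: "x \<in> X" "y \<in> X" "x \<noteq> y"
    using ch unfolding is_cherry_def by blast
  have xw: "x \<noteq> w"
  proof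
    assume "x = w" then have "card {x,w} = 1" by simp
    then show False using B(4)[OF w(2)] by simp
  qed
  have yw: "y \<noteq> w"
  proof
    assume "y = w" then have "card {y,w} = 1" by simp
    then show False using B(4)[OF w(3)] by simp
  qed
  have e12: "{x,w} \<noteq> {y,w}" using xy(3) xw by (auto simp: doubleton_eq_iff)
  have "degree E w \<ge> 2" using deg2[OF B(3) w(2) w(3) e12] by simp
  then have wX: "w \<notin> X" using B(7)[of w] by simp
  define L where "L = {z\<in>X. f z}"
  have finL: "finite L" using B(6) unfolding L_def by simp
  have xyL: "x \<in> L" "y \<in> L" using xy fx fy unfolding L_def by auto
  define g where "g v = (v \<in> L \<or> v = w)" for v
  have gf: "\<forall>z\<in>X. g z = f z" unfolding g_def L_def using wX by auto
  let ?C = "{e \<in> E. \<exists>u v. e = {u, v} \<and> g u \<noteq> g v}"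
  have gx: "g x" "g y" "g w" using xyL unfolding g_def by auto
  have notc: "e \<noteq> {x,w} \<and> e \<noteq> {y,w}" if e: "e \<in> ?C" for e
  proof -
    obtain u v where uv: "e = {u,v}" "g u \<noteq> g v" using e by blast
    show ?thesis
    proof (intro conjI notI)
      assume "e = {x,w}"
      then have "(u = x \<and> v = w) \<or> (u = w \<and> v = x)" using uv(1) by (auto simp: doubleton_eq_iff)
      then show False using uv(2) gx by auto
    next
      assume "e = {y,w}"
      then have "(u = y \<and> v = w) \<or> (u = w \<and> v = y)" using uv(1) by (auto simp: doubleton_eq_iff)
      then show False using uv(2) gx by auto
    qed
  qed
  let ?F = "(\<Union>z\<in>L - {x,y}. {e\<in>E. z \<in> e})"
  let ?G = "{e\<in>E. w \<in> e} - {{x,w},{y,w}}"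
  have sub: "?C \<subseteq> ?F \<union> ?G"
  proof
    fix e assume e: "e \<in> ?C"
    then obtain u v where uv: "e \<in> E" "e = {u,v}" "g u \<noteq> g v" by blast
    obtain t where t: "t \<in> e" "g t" using uv(2,3) by (cases "g u") auto
    have nc: "e \<noteq> {x,w}" "e \<noteq> {y,w}" using notc[OF e] by auto
    have "t \<in> L \<or> t = w" using t(2) unfolding g_def .
    then consider "t \<in> L - {x,y}" | "t = x" | "t = y" | "t = w" by blast
    then show "e \<in> ?F \<union> ?G"
    proof cases
      case 1 then show ?thesis using uv(1) t(1) by blast
    next
      case 2
      then have "e = {x,w}" using leaf_edge[OF bp xy(1) w(2) uv(1)] t(1) by blast
      then show ?thesis using nc by blast
    next
      case 3
      then have "e = {y,w}" using leaf_edge[OF bp xy(2) w(3) uv(1)] t(1) by blast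
      then show ?thesis using nc by blast
    next
      case 4 then show ?thesis using uv(1) t(1) nc by blast
    qed
  qed
  have finF: "finite ?F" using B(3) finL by simp
  have finG: "finite ?G" using B(3) by simp
  have "card ?C \<le> card (?F \<union> ?G)" by (rule card_mono[OF _ sub]) (use finF finG in simp)
  also have "\<dots> \<le> card ?F + card ?G" by (rule card_Un_le)
  also have "card ?F \<le> (\<Sum>z\<in>L - {x,y}. card {e\<in>E. z \<in> e})" by (rule card_UN_le) (use finL in simp)
  also have "(\<Sum>z\<in>L - {x,y}. card {e\<in>E. z \<in> e}) = (\<Sum>z\<in>L - {x,y}. 1)"
  proof (rule sum.cong)
    fix z assume "z \<in> L - {x,y}"
    then have "z \<in> X" unfolding L_def by blast
    then show "card {e\<in>E. z \<in> e} = 1" using B(7)[of z] unfolding degree_def by simp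
  qed simp
  also have "\<dots> = card (L - {x,y})" by simp
  also have "card (L - {x,y}) = k - 2" using finL xyL xy(3) unfolding ck[folded L_def, symmetric]
    by (simp add: card_Diff_subset)
  also have "card ?G = card {e\<in>E. w \<in> e} - 2"
  proof -
    have "{{x,w},{y,w}} \<subseteq> {e\<in>E. w \<in> e}" using w by auto
    then have "card ?G = card {e\<in>E. w \<in> e} - card {{x,w},{y,w}}"
      by (rule card_Diff_subset[rotated]) simp
    then show ?thesis using e12 by simp
  qed
  also have "card {e\<in>E. w \<in> e} \<le> 3" using B(8)[OF w(1)] unfolding degree_def .
  finally have c: "card ?C \<le> k - 2 + (3 - 2)" by simp
  have k2: "k \<ge> 2"
  proof -
    have "{x,y} \<subseteq> L" using xyL by auto
    then have "card {x,y} \<le> card L" using finL card_mono by blast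
    then show ?thesis using xy(3) ck unfolding L_def by simp
  qed
  have "parsimony X E f \<le> changes E g" by (rule pars_le[OF B(3) gf])
  also have "changes E g = card ?C" unfolding changes_def ..
  finally show ?thesis using c k2 by linarith
qed




locale ptree =
  fixes X V E and P :: "'v list"
  assumes bp: "binary_phylo_tree X V E" and pth: "is_path E P"
    and hx: "hd P \<in> X" and ly: "last P \<in> X" and xy: "hd P \<noteq> last P"
begin

abbreviation "n \<equiv> length P"

definition Sub :: "nat \<Rightarrow> 'v set" where
  "Sub i = {v. (P!i, v) \<in> (adj_in E ((V - set P) \<union> {P!i}))\<^sup>*}"

lemmas B = bp_facts[OF bp]

lemma Pne: "P \<noteq> []" using pth unfolding is_path_def by blast

lemma n2: "n \<ge> 2"
proof (rule ccontr)
  assume "\<not> n \<ge> 2"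
  moreover have "n \<noteq> 0" using Pne by simp
  ultimately have "n = 1" by linarith
  then obtain a where "P = [a]" by (metis One_nat_def length_0_conv length_Suc_conv)
  then show False using xy by simp
qed

lemma x0: "P!0 = hd P" using Pne by (simp add: hd_conv_nth)
lemma yl: "P!(n-1) = last P" using Pne by (simp add: last_conv_nth)

lemma Pedge: "Suc i < n \<Longrightarrow> {P!i, P!Suc i} \<in> E"
  using pth unfolding is_path_def by blast

lemma Pdist: "i < n \<Longrightarrow> l < n \<Longrightarrow> P!i = P!l \<Longrightarrow> i = l"
  using pth unfolding is_path_def by (simp add: nth_eq_iff_index_eq)

lemma Pneq: "i < n \<Longrightarrow> l < n \<Longrightarrow> i \<noteq> l \<Longrightarrow> P!i \<noteq> P!l"
  using Pdist by blast

lemma PV: assumes "i < n" shows "P!i \<in> V"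
proof (cases "Suc i < n")
  case True
  then show ?thesis using B(4)[OF Pedge[OF True]] by blast
next
  case False
  then have "i = Suc (i - 1)" "Suc (i-1) < n" using assms n2 by auto
  then have "{P!(i-1), P!i} \<in> E" using Pedge[of "i-1"] by metis
  then show ?thesis using B(4) by blast
qed

lemma setPV: "set P \<subseteq> V"
  using PV by (auto simp: in_set_conv_nth)

lemma interior_notX: assumes "0 < i" "i < n - 1" shows "P!i \<notin> X"
proof -
  have e1: "{P!(i-1), P!i} \<in> E" using Pedge[of "i-1"] assms by simp
  have e2: "{P!i, P!Suc i} \<in> E" using Pedge[of i] assms by simp
  have "P!(i-1) \<noteq> P!Suc i" by (rule Pneq) (use assms in auto)
  then have "{P!(i-1), P!i} \<noteq> {P!i, P!Suc i}" by (auto simp: doubleton_eq_iff)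
  then have "degree E (P!i) \<ge> 2" using deg2[OF B(3) e1 e2] by simp
  then show ?thesis using B(7)[of "P!i"] by simp
qed

lemma x_nb: assumes "{P!0, z} \<in> E" shows "z = P!1"
proof -
  have x: "P!0 \<in> X" using hx x0 by simp
  have e: "{P!0, P!1} \<in> E" using Pedge[of 0] n2 by simp
  have "{P!0, z} = {P!0, P!1}" using leaf_edge[OF bp x e assms] by simp
  moreover have "P!0 \<noteq> P!1" by (rule Pneq) (use n2 in auto)
  ultimately show ?thesis by (auto simp: doubleton_eq_iff)
qed

lemma y_nb: assumes "{P!(n-1), z} \<in> E" shows "z = P!(n-2)"
proof -
  have y: "P!(n-1) \<in> X" using ly yl by simp
  have "{P!(n-2), P!Suc (n-2)} \<in> E" using Pedge[of "n-2"] n2 by simp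
  moreover have "Suc (n-2) = n-1" using n2 by simp
  ultimately have e: "{P!(n-1), P!(n-2)} \<in> E" by (simp add: insert_commute)
  have "{P!(n-1), z} = {P!(n-1), P!(n-2)}" using leaf_edge[OF bp y e assms] by simp
  moreover have "P!(n-1) \<noteq> P!(n-2)" by (rule Pneq) (use n2 in auto)
  ultimately show ?thesis by (auto simp: doubleton_eq_iff)
qed

lemma seg_sub: assumes "b < n" shows "{P!t |t. a \<le> t \<and> t \<le> b} \<subseteq> set P"
proof
  fix z assume "z \<in> {P!t |t. a \<le> t \<and> t \<le> b}"
  then obtain t where "z = P!t" "t \<le> b" by blast
  then show "z \<in> set P" using assms by simp
qed

lemma path_reach: "i \<le> l \<Longrightarrow> l < n \<Longrightarrow> (P!i, P!l) \<in> (adj_in E {P!t |t. i \<le> t \<and> t \<le> l})\<^sup>*"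
proof (induction l)
  case 0 then show ?case by simp
next
  case (Suc l)
  show ?case
  proof (cases "i = Suc l")
    case True then show ?thesis by simp
  next
    case False
    then have il: "i \<le> l" using Suc.prems by simp
    have 0: "(P!i, P!l) \<in> (adj_in E {P!t |t. i \<le> t \<and> t \<le> l})\<^sup>*" using Suc.IH il Suc.prems by simp
    have sb: "{P!t |t. i \<le> t \<and> t \<le> l} \<subseteq> {P!t |t. i \<le> t \<and> t \<le> Suc l}"
    proof
      fix z assume "z \<in> {P!t |t. i \<le> t \<and> t \<le> l}"
      then obtain t where "z = P!t" "i \<le> t" "t \<le> l" by blast
      then show "z \<in> {P!t |t. i \<le> t \<and> t \<le> Suc l}" by (intro CollectI exI[of _ t]) simp
    qed
    have 1: "(P!i, P!l) \<in> (adj_in E {P!t |t. i \<le> t \<and> t \<le> Suc l})\<^sup>*" by (rule rt_mono[OF sb 0])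
    have "{P!l, P!Suc l} \<in> E" using Pedge[of l] Suc.prems(2) by blast
    moreover have "P!l \<in> {P!t |t. i \<le> t \<and> t \<le> Suc l}" using il by (intro CollectI exI[of _ l]) simp
    moreover have "P!Suc l \<in> {P!t |t. i \<le> t \<and> t \<le> Suc l}" using il by (intro CollectI exI[of _ "Suc l"]) simp
    ultimately have "(P!l, P!Suc l) \<in> adj_in E {P!t |t. i \<le> t \<and> t \<le> Suc l}" unfolding adj_in_def by simp
    then show ?thesis using 1 by (meson rtrancl.rtrancl_into_rtrancl)
  qed
qed

lemma reachP: assumes "i < n" "l < n" shows "(P!i, P!l) \<in> (adj_in E (set P))\<^sup>*"
proof -
  show ?thesis
  proof (cases "i \<le> l")
    case True
    have "{P!t |t. i \<le> t \<and> t \<le> l} \<subseteq> set P" using seg_sub[OF assms(2)] .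
    then show ?thesis by (rule rt_mono[OF _ path_reach[OF True assms(2)]])
  next
    case False
    then have li: "l \<le> i" by simp
    have "{P!t |t. l \<le> t \<and> t \<le> i} \<subseteq> set P" using seg_sub[OF assms(1)] .
    then have "(P!l, P!i) \<in> (adj_in E (set P))\<^sup>*" by (rule rt_mono[OF _ path_reach[OF li assms(1)]])
    then show ?thesis by (rule rt_sym)
  qed
qed

lemma Sub_in: "v \<in> Sub i \<Longrightarrow> v = P!i \<or> v \<in> V - set P"
proof -
  assume "v \<in> Sub i"
  then have "(P!i, v) \<in> (adj_in E ((V - set P) \<union> {P!i}))\<^sup>*" unfolding Sub_def by simp
  then have "v = P!i \<or> v \<in> (V - set P) \<union> {P!i}" by (rule reach_in)
  then show ?thesis by blast
qed

lemma Sub_P: "v \<in> Sub i \<Longrightarrow> v \<in> set P \<Longrightarrow> v = P!i"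
  using Sub_in by blast

lemma Sub_V: assumes "i < n" shows "Sub i \<subseteq> V"
proof
  fix v assume "v \<in> Sub i"
  then show "v \<in> V" using Sub_in PV[OF assms] by blast
qed

lemma P_Sub: "P!i \<in> Sub i" unfolding Sub_def by simp

lemma Sub_disj: assumes i: "i < n" and l: "l < n" and il: "i \<noteq> l" shows "Sub i \<inter> Sub l = {}"
proof (rule ccontr)
  assume "Sub i \<inter> Sub l \<noteq> {}"
  then obtain v where vi: "v \<in> Sub i" and vl: "v \<in> Sub l" by blast
  let ?B = "V - set P"
  have PiPl: "P!i \<noteq> P!l" using Pneq[OF i l il] .
  have vnl: "v \<noteq> P!l"
  proof
    assume "v = P!l"
    then have "P!l \<in> Sub i" using vi by simp
    then have "P!l = P!i" using Sub_P l by simp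
    then show False using PiPl by simp
  qed
  have "(P!l, v) \<in> (adj_in E (?B \<union> {P!l}))\<^sup>*" using vl unfolding Sub_def by simp
  moreover have "P!l \<notin> ?B" using l by simp
  ultimately obtain w where w: "(P!l, w) \<in> adj_in E (?B \<union> {P!l})" "w \<in> ?B" "(w, v) \<in> (adj_in E ?B)\<^sup>*"
    using last_exit vnl by metis
  have eE: "{w, P!l} \<in> E" using w(1) unfolding adj_in_def by (simp add: insert_commute)
  let ?E' = "E - {{w, P!l}}"
  have s1: "adj_in E ?B \<subseteq> adj_in ?E' V" by (rule avoid[where z="P!l"]) (use l in auto)
  have r1: "(w, v) \<in> (adj_in ?E' V)\<^sup>*" by (rule rtrancl_mono[OF s1, THEN subsetD, OF w(3)])
  have "(P!i, v) \<in> (adj_in E (?B \<union> {P!i}))\<^sup>*" using vi unfolding Sub_def by simp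
  then have r2': "(v, P!i) \<in> (adj_in E (?B \<union> {P!i}))\<^sup>*" by (rule rt_sym)
  have s2: "adj_in E (?B \<union> {P!i}) \<subseteq> adj_in ?E' V" by (rule avoid[where z="P!l"]) (use PV[OF i] l PiPl in auto)
  have r2: "(v, P!i) \<in> (adj_in ?E' V)\<^sup>*" by (rule rtrancl_mono[OF s2, THEN subsetD, OF r2'])
  have s3: "adj_in E (set P) \<subseteq> adj_in ?E' V" by (rule avoid[where z=w]) (use setPV w(2) in auto)
  have r3: "(P!i, P!l) \<in> (adj_in ?E' V)\<^sup>*" by (rule rtrancl_mono[OF s3, THEN subsetD, OF reachP[OF i l]])
  have "(w, P!l) \<in> (adj_in ?E' V)\<^sup>*" using r1 r2 r3 by (meson rtrancl_trans)
  then show False using bridge[OF B(1) eE] by simp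
qed

lemma cover0: assumes "(P!0, v) \<in> (adj_in E V)\<^sup>*"
  shows "\<exists>p\<in>set P. (p, v) \<in> (adj_in E ((V - set P) \<union> {p}))\<^sup>*"
  using assms
proof (induction rule: rtrancl_induct)
  case base
  then show ?case using Pne by (intro bexI[of _ "P!0"]) auto
next
  case (step c v)
  then obtain p where p: "p \<in> set P" "(p, c) \<in> (adj_in E ((V - set P) \<union> {p}))\<^sup>*" by blast
  show ?case
  proof (cases "v \<in> set P")
    case True then show ?thesis by blast
  next
    case False
    have "c = p \<or> c \<in> (V - set P) \<union> {p}" using reach_in[OF p(2)] .
    then have "c \<in> (V - set P) \<union> {p}" by blast
    moreover have "v \<in> V - set P" using step(2) False unfolding adj_in_def by simp
    moreover have "{c, v} \<in> E" using step(2) unfolding adj_in_def by simp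
    ultimately have "(c, v) \<in> adj_in E ((V - set P) \<union> {p})" unfolding adj_in_def by simp
    then show ?thesis using p by (meson rtrancl.rtrancl_into_rtrancl)
  qed
qed

lemma cover: assumes v: "v \<in> V" "v \<notin> set P" shows "\<exists>l. 0 < l \<and> l < n - 1 \<and> v \<in> Sub l"
proof -
  have "0 < n" using Pne by simp
  then have "P!0 \<in> V" by (rule PV)
  then have "(P!0, v) \<in> (adj_in E V)\<^sup>*" using B(9) v(1) unfolding connected_graph_def by blast
  then obtain p where p: "p \<in> set P" "(p, v) \<in> (adj_in E ((V - set P) \<union> {p}))\<^sup>*" using cover0 by blast
  obtain l where l: "l < n" "p = P!l" using p(1) by (auto simp: in_set_conv_nth)
  have vp: "v \<noteq> p" using v p by blast
  have "p \<notin> V - set P" using p by blast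
  then obtain w where w: "(p, w) \<in> adj_in E ((V - set P) \<union> {p})" "w \<in> V - set P"
    using last_exit[OF p(2) vp] by blast
  have pw: "{p, w} \<in> E" using w(1) unfolding adj_in_def by simp
  have l0: "l \<noteq> 0"
  proof
    assume "l = 0"
    then have "w = P!1" using x_nb pw l by simp
    then show False using w(2) n2 by simp
  qed
  have l1: "l \<noteq> n - 1"
  proof
    assume "l = n - 1"
    then have "w = P!(n-2)" using y_nb pw l by simp
    then show False using w(2) n2 by simp
  qed
  have "v \<in> Sub l" using p(2) l unfolding Sub_def by simp
  then show ?thesis using l0 l1 l by (intro exI[of _ l]) auto
qed

definition A :: "nat \<Rightarrow> 'v set" where "A i = {z\<in>X. z \<notin> set P \<and> z \<in> Sub i}"

lemma A_eq: "attached_leaves X V E (set P) (P!i) = A i"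
  unfolding attached_leaves_def A_def Sub_def by simp

lemma Sub_reach: "u \<in> Sub i \<Longrightarrow> (P!i, u) \<in> (adj_in E (Sub i))\<^sup>*"
  unfolding Sub_def by (rule reach_closure) simp

lemma split:
  assumes j: "0 < j" "j < n - 1" "odd (card (A j))" and ev: "\<forall>i. 0 < i \<and> i < j \<longrightarrow> even (card (A i))"
  shows "\<exists>U. U \<subseteq> V \<and> P!0 \<in> U \<and> P!(n-1) \<notin> U \<and> connected_graph U E \<and> connected_graph (V - U) E \<and> even (card (X \<inter> U))"
proof -
  have jn: "j < n" using j by simp
  define Pre where "Pre = {P!t |t. t \<le> j}"
  define U where "U = Pre \<union> (\<Union>i\<in>{1..j}. Sub i)"
  have inPre: "P!t \<in> Pre" if "t \<le> j" for t unfolding Pre_def using that by blast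
  have PreE: "\<exists>t. t \<le> j \<and> q = P!t" if "q \<in> Pre" for q using that unfolding Pre_def by blast
  have UE: "q \<in> Pre \<or> (\<exists>i. 1 \<le> i \<and> i \<le> j \<and> q \<in> Sub i)" if "q \<in> U" for q
    using that unfolding U_def by auto
  have SubU: "Sub i \<subseteq> U" if "1 \<le> i" "i \<le> j" for i unfolding U_def using that by auto
  have PreU: "Pre \<subseteq> U" unfolding U_def by blast
  have UV: "U \<subseteq> V"
  proof
    fix q assume "q \<in> U"
    then consider "q \<in> Pre" | i where "1 \<le> i" "i \<le> j" "q \<in> Sub i" using UE by blast
    then show "q \<in> V"
    proof cases
      case 1 then obtain t where "t \<le> j" "q = P!t" using PreE by blast
      then show ?thesis using PV jn by simp
    next
      case 2 then show ?thesis using Sub_V[of i] jn by auto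
    qed
  qed
  have xU: "P!0 \<in> U" using inPre[of 0] PreU by auto
  have PnotU: "P!t \<notin> U" if t: "j < t" "t < n" for t
  proof
    assume "P!t \<in> U"
    then consider "P!t \<in> Pre" | i where "1 \<le> i" "i \<le> j" "P!t \<in> Sub i" using UE by blast
    then show False
    proof cases
      case 1 then obtain s where "s \<le> j" "P!t = P!s" using PreE by blast
      then have "t = s" using Pdist t jn by simp
      then show False using t \<open>s \<le> j\<close> by simp
    next
      case 2
      then have "P!t = P!i" using Sub_P t by simp
      then have "t = i" using Pdist t jn 2 by simp
      then show False using t 2 by simp
    qed
  qed
  have yU: "P!(n-1) \<notin> U" using PnotU[of "n-1"] j by simp
  have reachPre: "(P!0, P!t) \<in> (adj_in E U)\<^sup>*" if t: "t \<le> j" for t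
  proof -
    have sb: "{P!s |s. 0 \<le> s \<and> s \<le> t} \<subseteq> U"
    proof
      fix q assume "q \<in> {P!s |s. 0 \<le> s \<and> s \<le> t}"
      then obtain s where "q = P!s" "s \<le> t" by blast
      then show "q \<in> U" using inPre[of s] PreU t by auto
    qed
    have "(P!0, P!t) \<in> (adj_in E {P!s |s. 0 \<le> s \<and> s \<le> t})\<^sup>*" using path_reach[of 0 t] t jn by simp
    then show ?thesis by (rule rt_mono[OF sb])
  qed
  have Ureach: "(P!0, u) \<in> (adj_in E U)\<^sup>*" if u: "u \<in> U" for u
  proof -
    consider "u \<in> Pre" | i where "1 \<le> i" "i \<le> j" "u \<in> Sub i" using UE u by blast
    then show ?thesis
    proof cases
      case 1 then obtain t where "t \<le> j" "u = P!t" using PreE by blast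
      then show ?thesis using reachPre by simp
    next
      case 2
      have "(P!i, u) \<in> (adj_in E U)\<^sup>*" by (rule rt_mono[OF SubU[OF 2(1,2)] Sub_reach[OF 2(3)]])
      moreover have "(P!0, P!i) \<in> (adj_in E U)\<^sup>*" using reachPre 2 by simp
      ultimately show ?thesis by (meson rtrancl_trans)
    qed
  qed
  have Uconn: "connected_graph U E"
    unfolding connected_graph_def
  proof (intro ballI)
    fix a b assume ab: "a \<in> U" "b \<in> U"
    have "(a, P!0) \<in> (adj_in E U)\<^sup>*" by (rule rt_sym[OF Ureach[OF ab(1)]])
    moreover have "(P!0, b) \<in> (adj_in E U)\<^sup>*" by (rule Ureach[OF ab(2)])
    ultimately
    show "(a, b) \<in> (adj_in E U)\<^sup>*" by (meson rtrancl_trans)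
  qed
  have SubW: "Sub l \<subseteq> V - U" if l: "j < l" "l < n" for l
  proof
    fix q assume q: "q \<in> Sub l"
    have "q \<in> V" using Sub_V[OF l(2)] q by blast
    moreover have "q \<notin> U"
    proof
      assume "q \<in> U"
      then consider "q \<in> Pre" | i where "1 \<le> i" "i \<le> j" "q \<in> Sub i" using UE by blast
      then show False
      proof cases
        case 1 then obtain t where t: "t \<le> j" "q = P!t" using PreE by blast
        then have "q \<in> set P" using jn by simp
        then have "q = P!l" using Sub_P[OF q] by simp
        then have "t = l" using Pdist t l jn by simp
        then show False using t l by simp
      next
        case 2
        have "Sub i \<inter> Sub l = {}" by (rule Sub_disj) (use 2 l jn in auto)
        then show False using 2(3) q by blast
      qed
    qed
    ultimately show "q \<in> V - U" by blast
  qed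
  have reachWP: "(P!t, P!(n-1)) \<in> (adj_in E (V - U))\<^sup>*" if t: "j < t" "t < n" for t
  proof -
    have sb: "{P!s |s. t \<le> s \<and> s \<le> n - 1} \<subseteq> V - U"
    proof
      fix q assume "q \<in> {P!s |s. t \<le> s \<and> s \<le> n - 1}"
      then obtain s where s: "q = P!s" "t \<le> s" "s \<le> n - 1" by blast
      then have "s < n" using t by simp
      then show "q \<in> V - U" using s PV PnotU[of s] t by simp
    qed
    have "(P!t, P!(n-1)) \<in> (adj_in E {P!s |s. t \<le> s \<and> s \<le> n - 1})\<^sup>*"
      by (rule path_reach) (use t in auto)
    then show ?thesis by (rule rt_mono[OF sb])
  qed
  have Wreach: "(v, P!(n-1)) \<in> (adj_in E (V - U))\<^sup>*" if v: "v \<in> V - U" for v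
  proof (cases "v \<in> set P")
    case True
    then obtain t where t: "t < n" "v = P!t" by (auto simp: in_set_conv_nth)
    have "j < t"
    proof (rule ccontr)
      assume "\<not> j < t"
      then have "v \<in> U" using inPre[of t] PreU t by auto
      then show False using v by blast
    qed
    then show ?thesis using reachWP t by simp
  next
    case False
    then obtain l where l: "0 < l" "l < n - 1" "v \<in> Sub l" using cover v by blast
    have jl: "j < l"
    proof (rule ccontr)
      assume "\<not> j < l"
      then have "v \<in> U" using SubU[of l] l by auto
      then show False using v by blast
    qed
    have ln: "l < n" using l by simp
    have "(P!l, v) \<in> (adj_in E (V - U))\<^sup>*" by (rule rt_mono[OF SubW[OF jl ln] Sub_reach[OF l(3)]])
    then have "(v, P!l) \<in> (adj_in E (V - U))\<^sup>*" by (rule rt_sym)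
    moreover have "(P!l, P!(n-1)) \<in> (adj_in E (V - U))\<^sup>*" using reachWP jl ln by simp
    ultimately show ?thesis by (meson rtrancl_trans)
  qed
  have Wconn: "connected_graph (V - U) E"
    unfolding connected_graph_def
  proof (intro ballI)
    fix a b assume ab: "a \<in> V - U" "b \<in> V - U"
    have "(a, P!(n-1)) \<in> (adj_in E (V - U))\<^sup>*" by (rule Wreach[OF ab(1)])
    moreover have "(P!(n-1), b) \<in> (adj_in E (V - U))\<^sup>*" by (rule rt_sym[OF Wreach[OF ab(2)]])
    ultimately
    show "(a, b) \<in> (adj_in E (V - U))\<^sup>*" by (meson rtrancl_trans)
  qed
  have x0X: "P!0 \<in> X" using hx x0 by simp
  have XU: "X \<inter> U = insert (P!0) (\<Union>i\<in>{1..j}. A i)"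
  proof
    show "X \<inter> U \<subseteq> insert (P!0) (\<Union>i\<in>{1..j}. A i)"
    proof
      fix z assume z: "z \<in> X \<inter> U"
      then consider "z \<in> Pre" | i where "1 \<le> i" "i \<le> j" "z \<in> Sub i" using UE by blast
      then show "z \<in> insert (P!0) (\<Union>i\<in>{1..j}. A i)"
      proof cases
        case 1 then obtain t where t: "t \<le> j" "z = P!t" using PreE by blast
        show ?thesis
        proof (cases "t = 0")
          case True then show ?thesis using t by simp
        next
          case False
          then have "P!t \<notin> X" using interior_notX[of t] t j by simp
          then show ?thesis using z t by simp
        qed
      next
        case 2
        have "z \<notin> set P"
        proof
          assume "z \<in> set P"
          then have "z = P!i" using Sub_P 2 by simp
          then have "z \<notin> X" using interior_notX[of i] 2 j by simp
          then show False using z by simp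
        qed
        then have "z \<in> A i" unfolding A_def using z 2 by simp
        then show ?thesis using 2 by auto
      qed
    qed
    show "insert (P!0) (\<Union>i\<in>{1..j}. A i) \<subseteq> X \<inter> U"
    proof
      fix z assume "z \<in> insert (P!0) (\<Union>i\<in>{1..j}. A i)"
      then consider "z = P!0" | i where "i \<in> {1..j}" "z \<in> A i" by blast
      then show "z \<in> X \<inter> U"
      proof cases
        case 1 then show ?thesis using x0X xU by simp
      next
        case 2
        then have "z \<in> X" "z \<in> Sub i" unfolding A_def by auto
        then show ?thesis using SubU[of i] 2(1) by auto
      qed
    qed
  qed
  have finA: "finite (A i)" for i using B(6) unfolding A_def by simp
  have x0A: "P!0 \<notin> (\<Union>i\<in>{1..j}. A i)" unfolding A_def using Pne by auto
  have disjA: "\<forall>a\<in>{1..j}. \<forall>b\<in>{1..j}. a \<noteq> b \<longrightarrow> A a \<inter> A b = {}"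
  proof (intro ballI impI)
    fix a b assume a: "a \<in> {1..j}" and b: "b \<in> {1..j}" and ab: "a \<noteq> b"
    have "Sub a \<inter> Sub b = {}" by (rule Sub_disj) (use a b ab jn in auto)
    then show "A a \<inter> A b = {}" unfolding A_def by blast
  qed
  have cU: "card (\<Union>i\<in>{1..j}. A i) = (\<Sum>i\<in>{1..j}. card (A i))"
    by (rule card_UN_disjoint) (use finA disjA in auto)
  have "card (X \<inter> U) = Suc (\<Sum>i\<in>{1..j}. card (A i))"
    using XU x0A cU finA by simp
  moreover have "{1..j} = insert j {1..<j}" using j by auto
  then have "(\<Sum>i\<in>{1..j}. card (A i)) = card (A j) + (\<Sum>i\<in>{1..<j}. card (A i))" by simp
  moreover have "even (\<Sum>i\<in>{1..<j}. card (A i))"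
    by (rule dvd_sum) (use ev in auto)
  ultimately have "even (card (X \<inter> U))" using j(3) by simp
  then show ?thesis using UV xU yU Uconn Wconn by blast
qed

end




lemma app_disj:
  assumes DA: "\<forall>i<length A. \<forall>j<length A. i \<noteq> j \<longrightarrow> wedges (A!i) \<inter> wedges (A!j) = {}"
    and DB: "\<forall>i<length B. \<forall>j<length B. i \<noteq> j \<longrightarrow> wedges (B!i) \<inter> wedges (B!j) = {}"
    and AB: "\<forall>a\<in>set A. \<forall>b\<in>set B. wedges a \<inter> wedges b = {}"
  shows "\<forall>i<length (A @ B). \<forall>j<length (A @ B). i \<noteq> j \<longrightarrow> wedges ((A @ B)!i) \<inter> wedges ((A @ B)!j) = {}"
proof (intro allI impI)
  fix i j assume i: "i < length (A @ B)" and j: "j < length (A @ B)" and ij: "i \<noteq> j"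
  show "wedges ((A @ B)!i) \<inter> wedges ((A @ B)!j) = {}"
  proof (cases "i < length A")
    case iA: True
    show ?thesis
    proof (cases "j < length A")
      case True
      then have "wedges (A!i) \<inter> wedges (A!j) = {}" using iA ij DA by blast
      then show ?thesis using iA True by (simp add: nth_append)
    next
      case False
      then have "j - length A < length B" using j by simp
      then have "B ! (j - length A) \<in> set B" by simp
      moreover have "A ! i \<in> set A" using iA by simp
      ultimately have "wedges (A!i) \<inter> wedges (B ! (j - length A)) = {}" using AB by blast
      then show ?thesis using iA False by (simp add: nth_append)
    qed
  next
    case iA: False
    then have iB: "i - length A < length B" using i by simp
    show ?thesis
    proof (cases "j < length A")
      case True
      then have "A ! j \<in> set A" by simp
      moreover have "B ! (i - length A) \<in> set B" using iB by simp
      ultimately have "wedges (A!j) \<inter> wedges (B ! (i - length A)) = {}" using AB by blast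
      then show ?thesis using True iA by (simp add: nth_append inf_commute)
    next
      case False
      then have "j - length A < length B" "i - length A \<noteq> j - length A" using j ij iA by auto
      then have "wedges (B!(i - length A)) \<inter> wedges (B!(j - length A)) = {}" using DB iB by blast
      then show ?thesis using iA False by (simp add: nth_append)
    qed
  qed
qed

lemma wedgesE: assumes "e \<in> wedges a" obtains p q where "(p,q) \<in> set (wpairs a)" "e = {p,q}"
proof -
  obtain pq where pq: "pq \<in> set (wpairs a)" "e = (\<lambda>(a,b). {a,b}) pq" using assms unfolding wedges_def by (rule imageE)
  obtain p q where "pq = (p,q)" by (cases pq)
  then show ?thesis using pq that by simp
qed

lemma cross_disj:
  assumes a: "set (wpairs a) \<subseteq> adj_in E U" and b: "set (wpairs b) \<subseteq> adj_in E W" and UW: "U \<inter> W = {}"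
  shows "wedges a \<inter> wedges b = {}"
proof (rule ccontr)
  assume "wedges a \<inter> wedges b \<noteq> {}"
  then obtain e where e: "e \<in> wedges a" "e \<in> wedges b" by blast
  obtain p q where pq: "(p,q) \<in> set (wpairs a)" "e = {p,q}" using wedgesE[OF e(1)] by blast
  obtain r s where rs: "(r,s) \<in> set (wpairs b)" "e = {r,s}" using wedgesE[OF e(2)] by blast
  have "(p,q) \<in> adj_in E U" using a pq(1) by (rule subsetD)
  then have pU: "p \<in> U" unfolding adj_in_def by simp
  have "(r,s) \<in> adj_in E W" using b rs(1) by (rule subsetD)
  then have rW: "r \<in> W" and sW: "s \<in> W" unfolding adj_in_def by simp_all
  have "p \<in> {r,s}" using pq(2) rs(2) by blast
  then have "p \<in> W" using rW sW by blast
  then show False using pU UW by blast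
qed


lemma main_contra:
  fixes X V1 V2 :: "'v set" and E1 E2 :: "'v set set" and k :: nat
    and x y :: 'v and P :: "'v list"
  assumes bp1: "binary_phylo_tree X V1 E1" and bp2: "binary_phylo_tree X V2 E2"
    and cX: "card X = 2 * k"
    and AA: "A_set k X E1 = A_set k X E2"
    and ch: "is_cherry X V1 E1 x y"
    and pth: "is_path E2 P" and hP: "hd P = x" and lP: "last P = y"
    and b: "b \<in> set P - {x, y}" and odd: "odd (card (attached_leaves X V2 E2 (set P) b))"
  shows False
proof -
  have xyc: "x \<in> X" "y \<in> X" "x \<noteq> y" using ch unfolding is_cherry_def by blast+
  interpret ptree X V2 E2 P
    by unfold_locales (use bp2 pth hP lP xyc in auto)
  note B2 = B
  obtain i0 where i0: "i0 < n" "b = P!i0" using b by (auto simp: in_set_conv_nth)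
  have "i0 \<noteq> 0"
  proof
    assume "i0 = 0" then have "b = x" using i0(2) x0 hP by simp
    then show False using b by simp
  qed
  moreover have "i0 \<noteq> n - 1"
  proof
    assume "i0 = n - 1" then have "b = y" using i0(2) yl lP by simp
    then show False using b by simp
  qed
  ultimately have i0': "0 < i0" "i0 < n - 1" using i0 by auto
  have oi0: "odd (card (A i0))" using odd i0 A_eq by simp
  define Q where "Q i = (0 < i \<and> i < n - 1 \<and> odd (card (A i)))" for i
  define j where "j = (LEAST i. Q i)"
  have Qi0: "Q i0" unfolding Q_def using i0' oi0 by simp
  have Qj: "Q j" unfolding j_def by (rule LeastI[of Q, OF Qi0])
  have ev: "\<forall>i. 0 < i \<and> i < j \<longrightarrow> even (card (A i))"
  proof (intro allI impI)
    fix i assume i: "0 < i \<and> i < j"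
    then have "\<not> Q i" unfolding j_def by (rule not_less_Least[OF conjunct2])
    moreover have "i < n - 1" using i Qj unfolding Q_def by simp
    ultimately show "even (card (A i))" using i unfolding Q_def by simp
  qed
  obtain U where U: "U \<subseteq> V2" "P!0 \<in> U" "P!(n-1) \<notin> U" "connected_graph U E2"
      "connected_graph (V2 - U) E2" "even (card (X \<inter> U))"
    using split[of j] Qj ev unfolding Q_def by blast
  have xU: "x \<in> U" using U(2) x0 hP by simp
  have yU: "y \<notin> U" using U(3) yl lP by simp
  have XV: "X \<subseteq> V2" using B2(5) .
  have finX: "finite X" using B2(6) .
  have finV: "finite V2" using B2(2) .
  have e2: "\<forall>e\<in>E2. card e = 2" using B2(4) by blast
  let ?W = "V2 - U"
  let ?SU = "X \<inter> U"
  let ?SW = "X \<inter> ?W"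
  have XUW: "X = ?SU \<union> ?SW" using XV by blast
  have dUW: "?SU \<inter> ?SW = {}" by blast
  have cXUW: "card X = card ?SU + card ?SW"
    using card_Un_disjoint[of ?SU ?SW] finX dUW XUW by simp
  have evW: "even (card ?SW)" using cXUW cX U(6) by presburger
  have finU: "finite U" using U(1) finV finite_subset by blast
  have finW: "finite ?W" using finV by simp
  obtain hU wsU where pU: "paired E2 U ?SU hU wsU" "hU x"
    using pair2[OF finU U(4) e2 _ U(6), of x] xU xyc by blast
  obtain hW wsW where pW: "paired E2 ?W ?SW hW wsW" "hW y"
    using pair2[OF finW U(5) e2 _ evW, of y] yU xyc U(1) XV by blast
  have cU: "2 * card {s\<in>?SU. hU s} = card ?SU" and lU: "2 * length wsU = card ?SU"
    and wU: "\<forall>w\<in>set wsU. w \<noteq> [] \<and> hd w \<in> ?SU \<and> last w \<in> ?SU \<and> hU (hd w) \<noteq> hU (last w) \<and> set (wpairs w) \<subseteq> adj_in E2 U"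
    and dU: "\<forall>i<length wsU. \<forall>j<length wsU. i \<noteq> j \<longrightarrow> wedges (wsU!i) \<inter> wedges (wsU!j) = {}"
    using pU(1) unfolding paired_def by blast+
  have cW: "2 * card {s\<in>?SW. hW s} = card ?SW" and lW: "2 * length wsW = card ?SW"
    and wW: "\<forall>w\<in>set wsW. w \<noteq> [] \<and> hd w \<in> ?SW \<and> last w \<in> ?SW \<and> hW (hd w) \<noteq> hW (last w) \<and> set (wpairs w) \<subseteq> adj_in E2 ?W"
    and dW: "\<forall>i<length wsW. \<forall>j<length wsW. i \<noteq> j \<longrightarrow> wedges (wsW!i) \<inter> wedges (wsW!j) = {}"
    using pW(1) unfolding paired_def by blast+
  define f where "f z = (if z \<in> X then (if z \<in> U then hU z else hW z) else undefined)" for z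
  define ws where "ws = wsU @ wsW"
  have fU: "f z = hU z" if "z \<in> ?SU" for z using that unfolding f_def by simp
  have fW: "f z = hW z" if "z \<in> ?SW" for z using that unfolding f_def by simp
  have fx: "f x" using fU[of x] xyc xU pU(2) by simp
  have "y \<in> V2" using xyc(2) XV by blast
  then have fy: "f y" using fW[of y] xyc yU pW(2) by simp
  have Tset: "{z\<in>X. f z} = {s\<in>?SU. hU s} \<union> {s\<in>?SW. hW s}"
  proof
    show "{z\<in>X. f z} \<subseteq> {s\<in>?SU. hU s} \<union> {s\<in>?SW. hW s}"
    proof
      fix z assume z: "z \<in> {z\<in>X. f z}"
      show "z \<in> {s\<in>?SU. hU s} \<union> {s\<in>?SW. hW s}"
      proof (cases "z \<in> U")
        case True then show ?thesis using z fU[of z] by simp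
      next
        case False then show ?thesis using z fW[of z] XV by auto
      qed
    qed
    show "{s\<in>?SU. hU s} \<union> {s\<in>?SW. hW s} \<subseteq> {z\<in>X. f z}"
    proof
      fix z assume z: "z \<in> {s\<in>?SU. hU s} \<union> {s\<in>?SW. hW s}"
      then consider "z \<in> ?SU" "hU z" | "z \<in> ?SW" "hW z" by blast
      then show "z \<in> {z\<in>X. f z}"
      proof cases
        case 1 then show ?thesis using fU[of z] by simp
      next
        case 2 then show ?thesis using fW[of z] by simp
      qed
    qed
  qed
  have cT: "card {z\<in>X. f z} = k"
  proof -
    have "card {z\<in>X. f z} = card {s\<in>?SU. hU s} + card {s\<in>?SW. hW s}"
      unfolding Tset by (rule card_Un_disjoint) (use finX in auto)
    then show ?thesis using cU cW cXUW cX by linarith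
  qed
  have lws: "length ws = k" unfolding ws_def using lU lW cXUW cX by simp
  have walks: "\<forall>w\<in>set ws. w \<noteq> [] \<and> hd w \<in> X \<and> last w \<in> X \<and> f (hd w) \<noteq> f (last w) \<and> (\<forall>(a,b)\<in>set (wpairs w). {a,b} \<in> E2)"
  proof
    fix w assume "w \<in> set ws"
    then consider "w \<in> set wsU" | "w \<in> set wsW" unfolding ws_def by auto
    then show "w \<noteq> [] \<and> hd w \<in> X \<and> last w \<in> X \<and> f (hd w) \<noteq> f (last w) \<and> (\<forall>(a,b)\<in>set (wpairs w). {a,b} \<in> E2)"
    proof cases
      case 1
      then have c: "w \<noteq> []" "hd w \<in> ?SU" "last w \<in> ?SU" "hU (hd w) \<noteq> hU (last w)" "set (wpairs w) \<subseteq> adj_in E2 U"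
        using bspec[OF wU 1] by blast+
      have "\<forall>(a,b)\<in>set (wpairs w). {a,b} \<in> E2" using c(5) unfolding adj_in_def by blast
      moreover have "f (hd w) \<noteq> f (last w)" using c(4) fU[OF c(2)] fU[OF c(3)] by simp
      ultimately show ?thesis using c(1,2,3) by blast
    next
      case 2
      then have c: "w \<noteq> []" "hd w \<in> ?SW" "last w \<in> ?SW" "hW (hd w) \<noteq> hW (last w)" "set (wpairs w) \<subseteq> adj_in E2 ?W"
        using bspec[OF wW 2] by blast+
      have "\<forall>(a,b)\<in>set (wpairs w). {a,b} \<in> E2" using c(5) unfolding adj_in_def by blast
      moreover have "f (hd w) \<noteq> f (last w)" using c(4) fW[OF c(2)] fW[OF c(3)] by simp
      ultimately show ?thesis using c(1,2,3) by blast
    qed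
  qed
  have cross: "\<forall>a\<in>set wsU. \<forall>b\<in>set wsW. wedges a \<inter> wedges b = {}"
  proof (intro ballI)
    fix a b assume a: "a \<in> set wsU" and b: "b \<in> set wsW"
    have "set (wpairs a) \<subseteq> adj_in E2 U" using bspec[OF wU a] by blast
    moreover have "set (wpairs b) \<subseteq> adj_in E2 ?W" using bspec[OF wW b] by blast
    ultimately show "wedges a \<inter> wedges b = {}" by (rule cross_disj) blast
  qed
  have disj: "\<forall>i<length ws. \<forall>j<length ws. i \<noteq> j \<longrightarrow> wedges (ws!i) \<inter> wedges (ws!j) = {}"
    unfolding ws_def by (rule app_disj[OF dU dW cross])
  have low: "k \<le> parsimony X E2 f" using lower[OF B2(3) walks disj] lws by simp
  define D where "D = {z\<in>X. \<not> f z}"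
  have finD: "finite D" unfolding D_def using finX by simp
  have cD: "card D = k"
  proof -
    have "D = X - {z\<in>X. f z}" unfolding D_def by blast
    then have "card D = card X - card {z\<in>X. f z}" using finX by (simp add: card_Diff_subset)
    then show ?thesis using cT cX by simp
  qed
  define g where "g v = (v \<notin> D)" for v
  have gf: "\<forall>z\<in>X. g z = f z" unfolding g_def D_def by blast
  have "changes E2 g \<le> (\<Sum>d\<in>D. degree E2 d)" by (rule upper[OF B2(3) finD, where c=True]) (simp add: g_def)
  also have "(\<Sum>d\<in>D. degree E2 d) = (\<Sum>d\<in>D. 1)"
  proof (rule sum.cong)
    fix d assume "d \<in> D"
    then have "d \<in> X" unfolding D_def by blast
    then show "degree E2 d = 1" using B2(7)[of d] by simp
  qed simp
  finally have "changes E2 g \<le> k" using cD by simp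
  moreover have "parsimony X E2 f \<le> changes E2 g" by (rule pars_le[OF B2(3) gf])
  ultimately have "parsimony X E2 f = k" using low by simp
  moreover have "f \<in> extensional X" unfolding f_def extensional_def by simp
  ultimately have "f \<in> A_set k X E2" unfolding A_set_def by simp
  then have "f \<in> A_set k X E1" using AA by simp
  then have "parsimony X E1 f = k" unfolding A_set_def by simp
  moreover have "parsimony X E1 f < k" by (rule cherry_bound[OF bp1 ch fx fy cT])
  ultimately show False by simp
qed

theorem corollary5:
  fixes X V1 V2 :: "'v set" and E1 E2 :: "'v set set" and k :: nat
    and x y :: 'v and P :: "'v list"
  assumes "k \<ge> 1"
    and "binary_phylo_tree X V1 E1" and "binary_phylo_tree X V2 E2"
    and "card X = 2 * k"
    and "A_set k X E1 = A_set k X E2"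
    and "is_cherry X V1 E1 x y"
    and "is_path E2 P" and "hd P = x" and "last P = y"
  shows "\<forall>b \<in> set P - {x, y}. even (card (attached_leaves X V2 E2 (set P) b))"
proof (intro ballI)
  fix b assume b: "b \<in> set P - {x, y}"
  show "even (card (attached_leaves X V2 E2 (set P) b))"
  proof (rule ccontr)
    assume "\<not> even (card (attached_leaves X V2 E2 (set P) b))"
    then show False using main_contra[OF assms(2-9) b] by blast
  qed
qed


end
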